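(* Let $W$ be a connected graphon. Then $\lambda_W\ge \dfrac{h_W^2}{8}$.
   Context: Let $I=[0,1]$ with Lebesgue measure $\mu_L$. A graphon is a measurable function $W:I^2\to I$ with $W(x,y)=W(y,x)$ for all $x,y$. Its degree function is $d_W(x)=\int_0^1 W(x,y)\,dy$. For measurable $A,B\subseteq I$ put $e_W(A,B)=\int_{A\times B}W$ and $\mathrm{vol}_W(A)=e_W(A,I)$. $W$ is connected if $e_W(A,A^c)\neq 0$ for every measurable $A\subseteq I$ with $0<\mu_L(A)<1$. The Cheeger constant is $h_W=\inf_{A:\,0<\mu_L(A)<1}\frac{e_W(A,A^c)}{\min\{\mathrm{vol}_W(A),\mathrm{vol}_W(A^c)\}}$. Let $\nu$ be the measure on $I$ with $d\nu=d_W\,d\mu_L$. For $f\in L^2(I,\nu)$ write $\|f\|_v^2=\int_0^1 f(x)^2d_W(x)\,dx$ and $\|df\|_e^2=\int_0^1\int_x^1 (f(y)-f(x))^2W(x,y)\,dy\,dx$. The bottom of the spectrum of the Laplacian is $\lambda_W=\inf\{\|df\|_e^2/\|f\|_v^2:\ f\in L^2(I,\nu),\ \int_0^1 f\,d_W\,dx=0,\ \|f\|_v\neq 0\}$. *)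

theory Defs
  imports "HOL-Analysis.Analysis"
begin

text \<open>The unit interval I = [0,1] with Lebesgue measure. A graphon is represented
  by a function W :: real => real => real whose values on I x I matter.\<close>

abbreviation unitI :: "real set" where "unitI \<equiv> {0..1}"

definition graphon :: "(real \<Rightarrow> real \<Rightarrow> real) \<Rightarrow> bool" where
  "graphon W \<longleftrightarrow>
     (\<lambda>p. W (fst p) (snd p)) \<in> borel_measurable (lebesgue_on (unitI \<times> unitI)) \<and>
     (\<forall>x\<in>unitI. \<forall>y\<in>unitI. 0 \<le> W x y \<and> W x y \<le> 1) \<and>
     (\<forall>x\<in>unitI. \<forall>y\<in>unitI. W x y = W y x)"

definition degW :: "(real \<Rightarrow> real \<Rightarrow> real) \<Rightarrow> real \<Rightarrow> real" where
  "degW W x = integral\<^sup>L (lebesgue_on unitI) (\<lambda>y. W x y)"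

definition eW :: "(real \<Rightarrow> real \<Rightarrow> real) \<Rightarrow> real set \<Rightarrow> real set \<Rightarrow> real" where
  "eW W A B = integral\<^sup>L (lebesgue_on (A \<times> B)) (\<lambda>p. W (fst p) (snd p))"

definition volW :: "(real \<Rightarrow> real \<Rightarrow> real) \<Rightarrow> real set \<Rightarrow> real" where
  "volW W A = eW W A unitI"

definition meas_subset :: "real set \<Rightarrow> bool" where
  "meas_subset A \<longleftrightarrow> A \<in> sets lebesgue \<and> A \<subseteq> unitI"

definition connected_graphon :: "(real \<Rightarrow> real \<Rightarrow> real) \<Rightarrow> bool" where
  "connected_graphon W \<longleftrightarrow>
     (\<forall>A. meas_subset A \<and> 0 < measure lebesgue A \<and> measure lebesgue A < 1
          \<longrightarrow> eW W A (unitI - A) \<noteq> 0)"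

definition cheeger :: "(real \<Rightarrow> real \<Rightarrow> real) \<Rightarrow> real" where
  "cheeger W = Inf {eW W A (unitI - A) / min (volW W A) (volW W (unitI - A)) | A.
                      meas_subset A \<and> 0 < measure lebesgue A \<and> measure lebesgue A < 1}"

definition L2nu :: "(real \<Rightarrow> real \<Rightarrow> real) \<Rightarrow> (real \<Rightarrow> real) \<Rightarrow> bool" where
  "L2nu W f \<longleftrightarrow> f \<in> borel_measurable (lebesgue_on unitI) \<and>
     integrable (lebesgue_on unitI) (\<lambda>x. (f x)\<^sup>2 * degW W x)"

definition vnorm2 :: "(real \<Rightarrow> real \<Rightarrow> real) \<Rightarrow> (real \<Rightarrow> real) \<Rightarrow> real" where
  "vnorm2 W f = integral\<^sup>L (lebesgue_on unitI) (\<lambda>x. (f x)\<^sup>2 * degW W x)"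

definition enorm2 :: "(real \<Rightarrow> real \<Rightarrow> real) \<Rightarrow> (real \<Rightarrow> real) \<Rightarrow> real" where
  "enorm2 W f = integral\<^sup>L (lebesgue_on unitI)
      (\<lambda>x. integral\<^sup>L (lebesgue_on {x..1}) (\<lambda>y. (f y - f x)\<^sup>2 * W x y))"

definition lambdaW :: "(real \<Rightarrow> real \<Rightarrow> real) \<Rightarrow> real" where
  "lambdaW W = Inf {enorm2 W f / vnorm2 W f | f.
      L2nu W f \<and> integral\<^sup>L (lebesgue_on unitI) (\<lambda>x. f x * degW W x) = 0 \<and> vnorm2 W f \<noteq> 0}"

end

theory Submission
  imports Defs "HOL-Probability.Distribution_Functions"
begin
lemma lebesgue_on_borel_eq:
  fixes h h0 :: "'a::euclidean_space \<Rightarrow> real"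
  assumes S: "S \<in> sets borel" and h0: "h0 \<in> borel_measurable borel"
   and ae: "AE x in lborel. x \<in> S \<longrightarrow> h x = h0 x" and out: "\<And>x. x \<notin> S \<Longrightarrow> h0 x = 0"
  shows "integral\<^sup>L (lebesgue_on S) h = integral\<^sup>L lborel h0"
    and "integrable (lebesgue_on S) h \<longleftrightarrow> integrable lborel h0"
    and "h \<in> borel_measurable (lebesgue_on S)"
proof -
  have Sl: "S \<in> sets lebesgue" using S by auto
  have ae2: "AE x in lebesgue. h0 x = indicator S x *\<^sub>R h x"
    using AE_completion[OF ae] by eventually_elim (auto simp: out indicator_def)
  have h0l: "h0 \<in> borel_measurable lebesgue" using h0 by (simp add: measurable_completion)
  have m: "(\<lambda>x. indicator S x *\<^sub>R h x) \<in> borel_measurable lebesgue"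
    by (rule borel_measurable_AE[OF h0l ae2])
  show "h \<in> borel_measurable (lebesgue_on S)"
    using m Sl by (subst borel_measurable_restrict_space_iff) auto
  have "integral\<^sup>L (lebesgue_on S) h = integral\<^sup>L lebesgue (\<lambda>x. indicator S x *\<^sub>R h x)"
    using Sl by (subst integral_restrict_space) auto
  also have "\<dots> = integral\<^sup>L lebesgue h0"
    by (rule integral_cong_AE[OF m h0l]) (use ae2 in auto)
  also have "\<dots> = integral\<^sup>L lborel h0" using h0 by (simp add: integral_completion)
  finally show "integral\<^sup>L (lebesgue_on S) h = integral\<^sup>L lborel h0" .
  have "integrable (lebesgue_on S) h \<longleftrightarrow> integrable lebesgue (\<lambda>x. indicator S x *\<^sub>R h x)"
    using Sl by (subst integrable_restrict_space) auto
  also have "\<dots> \<longleftrightarrow> integrable lebesgue h0"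
    by (rule integrable_cong_AE[OF m h0l]) (use ae2 in auto)
  also have "\<dots> \<longleftrightarrow> integrable lborel h0" using h0 by (simp add: integrable_completion)
  finally show "integrable (lebesgue_on S) h \<longleftrightarrow> integrable lborel h0" .
qed

lemma distr_swap_lborel:
  "distr lborel lborel (\<lambda>(x,y). (y,x)) = (lborel :: (real \<times> real) measure)"
  using lborel_pair.distr_pair_swap[symmetric] by (simp add: lborel_prod)

lemma null_swap:
  assumes "N \<in> null_sets (lborel :: (real \<times> real) measure)"
  shows "(\<lambda>(x,y). (y,x)) -` N \<in> null_sets lborel"
proof -
  have N: "N \<in> sets borel" using assms by auto
  have sw: "(\<lambda>(x::real,y::real). (y,x)) \<in> lborel \<rightarrow>\<^sub>M lborel"
      by (simp add: measurable_lborel2) (intro borel_measurable_continuous_onI, simp add: case_prod_beta' continuous_intros)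
  have "(\<lambda>(x,y). (y,x)) -` N \<inter> space lborel \<in> sets lborel" using measurable_sets[OF sw] N by simp
  then have N2: "(\<lambda>(x,y). (y,x)) -` N \<in> sets borel" by simp
  have "emeasure lborel ((\<lambda>(x,y). (y,x)) -` N \<inter> space lborel) = emeasure (distr lborel lborel (\<lambda>(x::real,y::real). (y,x))) N"
  proof (subst emeasure_distr)
    show "(\<lambda>(x::real,y::real). (y,x)) \<in> lborel \<rightarrow>\<^sub>M lborel"
      by (simp add: measurable_lborel2) (intro borel_measurable_continuous_onI, simp add: case_prod_beta' continuous_intros)
  qed (auto simp: N)
  also have "\<dots> = 0" using assms by (simp add: distr_swap_lborel null_setsD1)
  finally show ?thesis using N2 by (auto simp: null_sets_def)
qed

lemma AE_swap:
  assumes "AE p in (lborel :: (real \<times> real) measure). P p"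
  shows "AE p in lborel. P (snd p, fst p)"
proof -
  obtain N where N: "\<And>x. x \<in> space lborel - N \<Longrightarrow> P x" "N \<in> null_sets lborel"
    using AE_E3[OF assms] by blast
  show ?thesis
    apply (rule AE_I'[OF null_swap[OF N(2)]])
    using N(1) by (auto, metis UNIV_I Diff_iff space_borel space_lborel)
qed

lemma graphon_borel:
  assumes "graphon W"
  obtains w :: "real \<times> real \<Rightarrow> real" where "w \<in> borel_measurable borel"
   "\<And>p. 0 \<le> w p" "\<And>p. w p \<le> 1" "\<And>x y. w (x,y) = w (y,x)"
   "\<And>p. p \<notin> unitI \<times> unitI \<Longrightarrow> w p = 0"
   "AE p in lborel. p \<in> unitI \<times> unitI \<longrightarrow> W (fst p) (snd p) = w p"
proof -
  let ?S = "unitI \<times> unitI"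
  define g where "g p = indicator ?S p *\<^sub>R W (fst p) (snd p)" for p :: "real \<times> real"
  have Sb: "?S \<in> sets borel" by (intro borel_closed closed_Times closed_atLeastAtMost)
  have Sl: "?S \<in> sets lebesgue" using Sb by (intro sets_completionI_sets) auto
  have "g \<in> borel_measurable lebesgue"
    using assms Sl unfolding graphon_def g_def
    by (subst (asm) borel_measurable_restrict_space_iff) auto
  then obtain w0 where w0: "w0 \<in> borel_measurable lborel" "AE p in lborel. g p = w0 p"
    using completion_ex_borel_measurable_real by blast
  define w1 where "w1 p = indicator unitI (fst p) * indicator unitI (snd p) * max 0 (min 1 (w0 p))" for p
  have gS: "g p = indicator ?S p * max 0 (min 1 (g p))" for p
    using assms unfolding graphon_def g_def by (auto simp: indicator_def)
  have ae1: "AE p in lborel. g p = w1 p"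
    using w0(2) by eventually_elim (metis gS w1_def indicator_times mult.commute)
  have gsym: "g (snd p, fst p) = g p" for p
    using assms unfolding graphon_def g_def by (cases p) (auto simp: indicator_def)
  have ae2: "AE p in lborel. g p = w1 (snd p, fst p)"
    using AE_swap[OF ae1] by (simp add: gsym)
  define w where "w p = (w1 p + w1 (snd p, fst p)) / 2" for p
  show ?thesis
  proof
    have [measurable]: "w0 \<in> borel_measurable (lborel \<Otimes>\<^sub>M lborel)" using w0 by (simp add: lborel_prod)
    have "w \<in> borel_measurable (lborel \<Otimes>\<^sub>M lborel)" unfolding w_def w1_def by measurable
    then show "w \<in> borel_measurable borel" by (simp add: lborel_prod)
    show "0 \<le> w p" for p unfolding w_def w1_def by (auto simp: indicator_def)
    show "w p \<le> 1" for p unfolding w_def w1_def by (auto simp: indicator_def)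
    show "w (x,y) = w (y,x)" for x y unfolding w_def by simp
    show "p \<notin> ?S \<Longrightarrow> w p = 0" for p unfolding w_def w1_def
      by (cases p) (auto simp: indicator_def)
    show "AE p in lborel. p \<in> ?S \<longrightarrow> W (fst p) (snd p) = w p"
      using ae1 ae2 by eventually_elim (auto simp: w_def g_def)
  qed
qed

locale gsetup =
  fixes W :: "real \<Rightarrow> real \<Rightarrow> real" and w :: "real \<times> real \<Rightarrow> real"
  assumes graphon: "graphon W"
  and w_meas[measurable]: "w \<in> borel_measurable (lborel \<Otimes>\<^sub>M lborel)"
  and w_nonneg: "\<And>p. 0 \<le> w p" and w_le1: "\<And>p. w p \<le> 1"
  and w_sym: "\<And>x y. w (x,y) = w (y,x)"
  and w_out: "\<And>p. p \<notin> unitI \<times> unitI \<Longrightarrow> w p = 0"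
  and w_ae: "AE p in lborel. p \<in> unitI \<times> unitI \<longrightarrow> W (fst p) (snd p) = w p"
begin

definition Dn :: "real \<Rightarrow> ennreal" where "Dn x = (\<integral>\<^sup>+y. ennreal (w (x,y)) \<partial>lborel)"
definition D :: "real \<Rightarrow> real" where "D x = enn2real (Dn x)"

lemma w_borel: "w \<in> borel_measurable borel"
  using w_meas by (simp add: lborel_prod)

lemma w_sec_meas[measurable]: "(\<lambda>y. w (x,y)) \<in> borel_measurable lborel"
  by measurable

lemma Dn_meas[measurable]: "Dn \<in> borel_measurable lborel"
  unfolding Dn_def by measurable

lemma D_meas[measurable]: "D \<in> borel_measurable lborel"
  unfolding D_def by measurable

lemma w_le_ind: "w (x,y) \<le> indicator unitI y"
  using w_out[of "(x,y)"] w_le1[of "(x,y)"] by (cases "y \<in> unitI") (auto simp: indicator_def)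

lemma w_le_indx: "w (x,y) \<le> indicator unitI x"
  using w_out[of "(x,y)"] w_le1[of "(x,y)"] by (cases "x \<in> unitI") (auto simp: indicator_def)

lemma Dn_le1: "Dn x \<le> 1"
proof -
  have "Dn x \<le> (\<integral>\<^sup>+y. indicator unitI y \<partial>lborel)"
    unfolding Dn_def by (intro nn_integral_mono) (use ennreal_leI[OF w_le_ind] in \<open>auto simp: ennreal_indicator\<close>)
  also have "\<dots> = 1" by simp
  finally show ?thesis .
qed

lemma Dn_fin: "Dn x < \<infinity>"
  using Dn_le1[of x] by (simp add: le_less_trans)

lemma Dn_eq: "Dn x = ennreal (D x)"
  using Dn_fin[of x] unfolding D_def by simp

lemma D_nonneg: "0 \<le> D x" unfolding D_def by simp

lemma D_le1: "D x \<le> 1"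
  using Dn_le1[of x] unfolding D_def
  using enn2real_mono[of "Dn x" 1] by simp

lemma Dn_out: "x \<notin> unitI \<Longrightarrow> Dn x = 0"
  unfolding Dn_def using w_out[of "(x,_)"] by (subst nn_integral_cong[where v="\<lambda>_. 0"]) auto

lemma D_out: "x \<notin> unitI \<Longrightarrow> D x = 0"
  unfolding D_def by (simp add: Dn_out)

lemma sections:
  "AE x in lborel. x \<in> unitI \<longrightarrow> (AE y in lborel. y \<in> unitI \<longrightarrow> W x y = w (x,y))"
proof -
  obtain N where N: "\<And>p. p \<in> space lborel - N \<Longrightarrow> (p \<in> unitI \<times> unitI \<longrightarrow> W (fst p) (snd p) = w p)"
     "N \<in> null_sets (lborel :: (real\<times>real) measure)"
    using AE_E3[OF w_ae] by blast
  have N2: "N \<in> null_sets (lborel \<Otimes>\<^sub>M lborel)" using N(2) by (simp add: lborel_prod)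
  have "AE p in lborel \<Otimes>\<^sub>M lborel. p \<notin> N" using AE_not_in[OF N2] .
  moreover have "{p \<in> space (lborel \<Otimes>\<^sub>M lborel). p \<notin> N} = space (lborel \<Otimes>\<^sub>M lborel) - N" by auto
  then have Nm: "{p \<in> space (lborel \<Otimes>\<^sub>M lborel). p \<notin> N} \<in> sets (lborel \<Otimes>\<^sub>M lborel)"
    using N2 by (metis null_setsD2 sets.Diff sets.top)
  ultimately have "AE x in lborel. AE y in lborel. (x,y) \<notin> N"
    using lborel_pair.AE_pair_iff[of "\<lambda>x y. (x,y) \<notin> N"] by simp
  then show ?thesis
  proof eventually_elim
    case (elim x)
    show ?case
    proof
      assume x: "x \<in> unitI"
      show "AE y in lborel. y \<in> unitI \<longrightarrow> W x y = w (x,y)"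
        using elim by eventually_elim (use N(1)[of "(x,_)"] x in auto)
    qed
  qed
qed

lemma degW_ae: "AE x in lborel. x \<in> unitI \<longrightarrow> degW W x = D x"
  using sections
proof eventually_elim
  case (elim x)
  show ?case
  proof
    assume x: "x \<in> unitI"
    have "degW W x = integral\<^sup>L lborel (\<lambda>y. w (x,y))"
      unfolding degW_def
      by (rule lebesgue_on_borel_eq(1)) (use elim x w_out in \<open>auto simp: w_borel\<close>)
    also have "\<dots> = D x" unfolding D_def Dn_def
      by (subst integral_eq_nn_integral) (auto simp: w_nonneg)
    finally show "degW W x = D x" .
  qed
qed

definition en :: "real set \<Rightarrow> real set \<Rightarrow> ennreal" where
  "en S T = (\<integral>\<^sup>+x. \<integral>\<^sup>+y. ennreal (indicator S x * indicator T y * w (x,y)) \<partial>lborel \<partial>lborel)"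

definition vn :: "real set \<Rightarrow> ennreal" where
  "vn S = (\<integral>\<^sup>+x. indicator S x * Dn x \<partial>lborel)"

lemma eW_en:
  assumes S: "S \<in> sets borel" "S \<subseteq> unitI" and T: "T \<in> sets borel" "T \<subseteq> unitI"
  shows "eW W S T = enn2real (en S T)"
proof -
  have [measurable]: "S \<in> sets lborel" "T \<in> sets lborel" using S T by auto
  have ST: "S \<times> T \<in> sets borel"
  proof -
    have "S \<times> T \<in> sets (lborel \<Otimes>\<^sub>M lborel)" by measurable
    then show ?thesis by (subst (asm) lborel_prod) simp
  qed
  have m2: "(\<lambda>p. indicator (S \<times> T) p * w p) \<in> borel_measurable (lborel \<Otimes>\<^sub>M lborel)"
    by measurable
  have "eW W S T = integral\<^sup>L lborel (\<lambda>p. indicator (S \<times> T) p * w p)"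
    unfolding eW_def
  proof (rule lebesgue_on_borel_eq(1))
    show "(\<lambda>p. indicator (S \<times> T) p * w p) \<in> borel_measurable borel"
      using m2 by (simp add: lborel_prod)
    show "AE x in lborel. x \<in> S \<times> T \<longrightarrow> W (fst x) (snd x) = indicator (S \<times> T) x * w x"
      using w_ae by eventually_elim (use S T in auto)
  qed (use ST in auto)
  also have "\<dots> = enn2real (\<integral>\<^sup>+p. ennreal (indicator (S \<times> T) p * w p) \<partial>lborel)"
    using m2 by (subst integral_eq_nn_integral) (auto simp: w_nonneg lborel_prod[symmetric])
  also have "(\<integral>\<^sup>+p. ennreal (indicator (S \<times> T) p * w p) \<partial>lborel) = 
     (\<integral>\<^sup>+p. ennreal (indicator (S \<times> T) p * w p) \<partial>(lborel \<Otimes>\<^sub>M lborel))"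
    by (simp add: lborel_prod)
  also have "\<dots> = en S T"
    unfolding en_def
    by (subst lborel.nn_integral_fst[symmetric]) (auto simp: indicator_times intro!: nn_integral_cong)
  finally show ?thesis .
qed

lemma en_I: "en S unitI = vn S"
proof -
  have "en S unitI = (\<integral>\<^sup>+x. indicator S x * Dn x \<partial>lborel)"
    unfolding en_def Dn_def
  proof (intro nn_integral_cong)
    fix x
    have "(\<integral>\<^sup>+ y. ennreal (indicator S x * indicator unitI y * w (x, y)) \<partial>lborel)
        = (\<integral>\<^sup>+ y. indicator S x * ennreal (w (x, y)) \<partial>lborel)"
      by (intro nn_integral_cong) (use w_out[of "(x,_)"] in \<open>auto simp: indicator_def\<close>)
    also have "\<dots> = indicator S x * (\<integral>\<^sup>+ y. ennreal (w (x, y)) \<partial>lborel)"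
      by (rule nn_integral_cmult) measurable
    finally show "(\<integral>\<^sup>+ y. ennreal (indicator S x * indicator unitI y * w (x, y)) \<partial>lborel)
        = indicator S x * (\<integral>\<^sup>+ y. ennreal (w (x, y)) \<partial>lborel)" .
  qed
  then show ?thesis unfolding vn_def .
qed

lemma volW_vn:
  assumes S: "S \<in> sets borel" "S \<subseteq> unitI"
  shows "volW W S = enn2real (vn S)"
  unfolding volW_def using eW_en[OF S, of unitI] by (simp add: en_I)

end

context gsetup begin

definition Qn :: "(real \<Rightarrow> real) \<Rightarrow> ennreal" where
  "Qn p = (\<integral>\<^sup>+x. \<integral>\<^sup>+y. ennreal ((p y - p x)\<^sup>2 * w (x,y)) \<partial>lborel \<partial>lborel)"

definition Nn :: "(real \<Rightarrow> real) \<Rightarrow> ennreal" where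
  "Nn p = (\<integral>\<^sup>+x. ennreal ((p x)\<^sup>2) * Dn x \<partial>lborel)"

definition En :: "(real \<Rightarrow> real) \<Rightarrow> ennreal" where
  "En p = (\<integral>\<^sup>+x. \<integral>\<^sup>+y. ennreal ((if x \<le> y then 1 else 0) * ((p y - p x)\<^sup>2 * w (x,y))) \<partial>lborel \<partial>lborel)"

lemma swap_int:
  assumes [measurable]: "case_prod f \<in> borel_measurable (lborel \<Otimes>\<^sub>M lborel)"
  shows "(\<integral>\<^sup>+x. \<integral>\<^sup>+y. f x y \<partial>lborel \<partial>lborel) = (\<integral>\<^sup>+x. \<integral>\<^sup>+y. f y x \<partial>lborel \<partial>lborel)"
  using lborel_pair.Fubini'[OF assms] by simp

lemma Nn_x:
  assumes [measurable]: "p \<in> borel_measurable lborel"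
  shows "(\<integral>\<^sup>+x. \<integral>\<^sup>+y. ennreal ((p x)\<^sup>2 * w (x,y)) \<partial>lborel \<partial>lborel) = Nn p"
  unfolding Nn_def Dn_def
  by (intro nn_integral_cong) (simp add: ennreal_mult' nn_integral_cmult)

lemma Nn_y:
  assumes [measurable]: "p \<in> borel_measurable lborel"
  shows "(\<integral>\<^sup>+x. \<integral>\<^sup>+y. ennreal ((p y)\<^sup>2 * w (x,y)) \<partial>lborel \<partial>lborel) = Nn p"
proof -
  have "(\<integral>\<^sup>+x. \<integral>\<^sup>+y. ennreal ((p y)\<^sup>2 * w (x,y)) \<partial>lborel \<partial>lborel)
      = (\<integral>\<^sup>+x. \<integral>\<^sup>+y. ennreal ((p x)\<^sup>2 * w (y,x)) \<partial>lborel \<partial>lborel)"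
    by (rule swap_int) measurable
  also have "\<dots> = (\<integral>\<^sup>+x. \<integral>\<^sup>+y. ennreal ((p x)\<^sup>2 * w (x,y)) \<partial>lborel \<partial>lborel)"
    by (simp add: w_sym)
  finally show ?thesis using Nn_x by simp
qed

lemma Qn_le:
  assumes [measurable]: "p \<in> borel_measurable lborel"
  shows "Qn p \<le> 4 * Nn p"
proof -
  have "Qn p \<le> (\<integral>\<^sup>+x. \<integral>\<^sup>+y. 2 * ennreal ((p x)\<^sup>2 * w (x,y)) + 2 * ennreal ((p y)\<^sup>2 * w (x,y)) \<partial>lborel \<partial>lborel)"
    unfolding Qn_def
  proof (intro nn_integral_mono)
    fix x y
    have "(p y - p x)\<^sup>2 \<le> 2 * (p x)\<^sup>2 + 2 * (p y)\<^sup>2"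
    proof -
      have "0 \<le> (p x + p y)\<^sup>2" by simp
      moreover have "(p y - p x)\<^sup>2 = 2 * (p x)\<^sup>2 + 2 * (p y)\<^sup>2 - (p x + p y)\<^sup>2"
        by (simp add: power2_eq_square algebra_simps)
      ultimately show ?thesis by linarith
    qed
    then have "(p y - p x)\<^sup>2 * w (x,y) \<le> 2 * ((p x)\<^sup>2 * w (x,y)) + 2 * ((p y)\<^sup>2 * w (x,y))"
      using w_nonneg[of "(x,y)"] by (metis distrib_left mult.assoc mult_right_mono distrib_right)
    show "ennreal ((p y - p x)\<^sup>2 * w (x,y)) \<le> 2 * ennreal ((p x)\<^sup>2 * w (x,y)) + 2 * ennreal ((p y)\<^sup>2 * w (x,y))"
    proof -
      have a: "0 \<le> (p x)\<^sup>2 * w (x,y)" "0 \<le> (p y)\<^sup>2 * w (x,y)" using w_nonneg[of "(x,y)"] by auto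
      have "2 * ennreal ((p x)\<^sup>2 * w (x,y)) + 2 * ennreal ((p y)\<^sup>2 * w (x,y))
          = ennreal (2 * ((p x)\<^sup>2 * w (x,y)) + 2 * ((p y)\<^sup>2 * w (x,y)))"
        using a by (subst ennreal_plus) (auto simp: ennreal_mult)
      then show ?thesis using \<open>(p y - p x)\<^sup>2 * w (x,y) \<le> _\<close> by (simp add: ennreal_leI)
    qed
  qed
  also have "\<dots> = 2 * Nn p + 2 * Nn p"
    by (simp add: nn_integral_add nn_integral_cmult Nn_x Nn_y)
  finally show ?thesis by (simp add: ring_distribs(2)[symmetric] mult.assoc[symmetric])
qed

lemma Qn_le_En:
  assumes [measurable]: "p \<in> borel_measurable lborel"
  shows "Qn p \<le> 2 * En p"
proof -
  define F where "F x y = ennreal ((p y - p x)\<^sup>2 * w (x,y))" for x y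
  have [measurable]: "case_prod F \<in> borel_measurable (lborel \<Otimes>\<^sub>M lborel)" unfolding F_def by measurable
  have Fs: "F x y = F y x" for x y unfolding F_def by (simp add: w_sym power2_commute)
  have En: "En p = (\<integral>\<^sup>+x. \<integral>\<^sup>+y. (if x \<le> y then 1 else 0) * F x y \<partial>lborel \<partial>lborel)"
    unfolding En_def F_def by (intro nn_integral_cong) simp
  have "Qn p = (\<integral>\<^sup>+x. \<integral>\<^sup>+y. (if x \<le> y then 1 else 0) * F x y + (if y < x then 1 else 0) * F x y \<partial>lborel \<partial>lborel)"
    unfolding Qn_def F_def by (intro nn_integral_cong) simp
  also have "\<dots> = En p + (\<integral>\<^sup>+x. \<integral>\<^sup>+y. (if y < x then 1 else 0) * F x y \<partial>lborel \<partial>lborel)"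
    unfolding En by (simp add: nn_integral_add)
  also have "(\<integral>\<^sup>+x. \<integral>\<^sup>+y. (if y < x then 1 else 0) * F x y \<partial>lborel \<partial>lborel)
        = (\<integral>\<^sup>+x. \<integral>\<^sup>+y. (if x < y then 1 else 0) * F y x \<partial>lborel \<partial>lborel)"
    by (rule swap_int) measurable
  also have "\<dots> \<le> En p" unfolding En
    by (intro nn_integral_mono) (auto simp: Fs)
  finally show ?thesis by (simp add: mult_2 add_left_mono)
qed

end

definition G :: "real \<Rightarrow> real \<Rightarrow> real \<Rightarrow> ennreal" where
  "G a b t = (if b \<le> t \<and> t < a then 1 else 0) + (if a \<le> t \<and> t < b then 1 else 0)"

lemma layer: "(\<integral>\<^sup>+t. G a b t \<partial>lborel) = ennreal \<bar>a - b\<bar>"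
proof -
  have "(\<integral>\<^sup>+t. G a b t \<partial>lborel) = (\<integral>\<^sup>+t. indicator {b..<a} t + indicator {a..<b} t \<partial>lborel)"
    unfolding G_def by (intro nn_integral_cong) (auto simp: indicator_def)
  also have "\<dots> = emeasure lborel {b..<a} + emeasure lborel {a..<b}"
    by (simp add: nn_integral_add)
  also have "\<dots> = ennreal \<bar>a - b\<bar>"
    by (cases "a \<le> b") auto
  finally show ?thesis .
qed

lemma pointwise_amgm:
  fixes a b h :: real assumes "0 \<le> h"
  shows "h * \<bar>a\<^sup>2 - b\<^sup>2\<bar> \<le> (a - b)\<^sup>2 + (h\<^sup>2/2) * (a\<^sup>2 + b\<^sup>2)"
proof -
  have e1: "h * \<bar>a\<^sup>2 - b\<^sup>2\<bar> = \<bar>a - b\<bar> * (h * \<bar>a + b\<bar>)"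
    using assms by (simp add: power2_eq_square algebra_simps abs_mult[symmetric])
  have e2: "\<bar>a - b\<bar> * (h * \<bar>a + b\<bar>) \<le> (a - b)\<^sup>2 + (h * \<bar>a + b\<bar>)\<^sup>2 / 4"
  proof -
    have "0 \<le> (\<bar>a - b\<bar> - h * \<bar>a + b\<bar> / 2)\<^sup>2" by simp
    then show ?thesis by (simp add: power2_eq_square algebra_simps)
  qed
  have e3: "(h * \<bar>a + b\<bar>)\<^sup>2 / 4 \<le> (h\<^sup>2/2) * (a\<^sup>2 + b\<^sup>2)"
  proof -
    have "(a + b)\<^sup>2 \<le> 2 * (a\<^sup>2 + b\<^sup>2)"
    proof -
      have "0 \<le> (a - b)\<^sup>2" by simp
      moreover have "(a + b)\<^sup>2 = 2 * (a\<^sup>2 + b\<^sup>2) - (a - b)\<^sup>2" by (simp add: power2_eq_square algebra_simps)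
      ultimately show ?thesis by linarith
    qed
    then have "h\<^sup>2 * (a + b)\<^sup>2 \<le> h\<^sup>2 * (2 * (a\<^sup>2 + b\<^sup>2))" by (simp add: mult_left_mono)
    then show ?thesis by (simp add: power_mult_distrib power2_abs algebra_simps)
  qed
  show ?thesis using e1 e2 e3 by linarith
qed

lemma G_meas[measurable (raw)]:
  assumes [measurable]: "f \<in> borel_measurable M" "g \<in> borel_measurable M" "h \<in> borel_measurable M"
  shows "(\<lambda>z. G (f z) (g z) (h z)) \<in> borel_measurable M"
  unfolding G_def by measurable

context gsetup begin

definition St :: "(real \<Rightarrow> real) \<Rightarrow> real \<Rightarrow> real set" where
  "St p t = {x. x \<in> unitI \<and> t < (p x)\<^sup>2}"

lemma St_borel:
  assumes [measurable]: "p \<in> borel_measurable lborel"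
  shows "St p t \<in> sets borel"
proof -
  have "{x \<in> space lborel. x \<in> unitI \<and> t < (p x)\<^sup>2} \<in> sets lborel" by measurable
  then show ?thesis unfolding St_def by simp
qed

lemma St_sub: "St p t \<subseteq> unitI" unfolding St_def by auto

lemma en_layer:
  assumes [measurable]: "p \<in> borel_measurable lborel"
  shows "(\<integral>\<^sup>+x. \<integral>\<^sup>+y. ennreal (w (x,y)) * G ((p x)\<^sup>2) ((p y)\<^sup>2) t \<partial>lborel \<partial>lborel)
       = en (St p t) (unitI - St p t) + en (unitI - St p t) (St p t)"
proof -
  have [measurable]: "St p t \<in> sets lborel" using St_borel[of p t] by simp
  have pw: "ennreal (w (x,y)) * G ((p x)\<^sup>2) ((p y)\<^sup>2) t =
     ennreal (indicator (St p t) x * indicator (unitI - St p t) y * w (x,y)) +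
     ennreal (indicator (unitI - St p t) x * indicator (St p t) y * w (x,y))" for x y
  proof (cases "x \<in> unitI \<and> y \<in> unitI")
    case True
    then show ?thesis unfolding G_def St_def by (auto simp: indicator_def not_less)
  next
    case False
    then have "w (x,y) = 0" using w_out by auto
    then show ?thesis by simp
  qed
  show ?thesis unfolding en_def pw
    by (simp add: nn_integral_add)
qed

end

context gsetup begin

lemma int_St_Nn:
  assumes [measurable]: "p \<in> borel_measurable lborel"
  shows "(\<integral>\<^sup>+t. indicator {0..} t * vn (St p t) \<partial>lborel) = Nn p"
proof -
  have "(\<integral>\<^sup>+t. indicator {0..} t * vn (St p t) \<partial>lborel)
     = (\<integral>\<^sup>+t. \<integral>\<^sup>+x. (if 0 \<le> t \<and> x \<in> unitI \<and> t < (p x)\<^sup>2 then 1 else 0) * Dn x \<partial>lborel \<partial>lborel)"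
    unfolding vn_def
    by (intro nn_integral_cong) (auto simp: nn_integral_cmult[symmetric] St_def indicator_def intro!: nn_integral_cong)
  also have "\<dots> = (\<integral>\<^sup>+x. \<integral>\<^sup>+t. (if 0 \<le> t \<and> x \<in> unitI \<and> t < (p x)\<^sup>2 then 1 else 0) * Dn x \<partial>lborel \<partial>lborel)"
    by (rule lborel_pair.Fubini') measurable
  also have "\<dots> = (\<integral>\<^sup>+x. ennreal ((p x)\<^sup>2) * Dn x \<partial>lborel)"
  proof (intro nn_integral_cong)
    fix x
    show "(\<integral>\<^sup>+t. (if 0 \<le> t \<and> x \<in> unitI \<and> t < (p x)\<^sup>2 then 1 else 0) * Dn x \<partial>lborel) = ennreal ((p x)\<^sup>2) * Dn x"
    proof (cases "x \<in> unitI")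
      case True
      have "(\<integral>\<^sup>+t. (if 0 \<le> t \<and> x \<in> unitI \<and> t < (p x)\<^sup>2 then 1 else 0) * Dn x \<partial>lborel)
          = (\<integral>\<^sup>+t. Dn x * indicator {0..<(p x)\<^sup>2} t \<partial>lborel)"
        using True by (intro nn_integral_cong) (auto simp: indicator_def)
      also have "\<dots> = Dn x * ennreal ((p x)\<^sup>2)"
        by (subst nn_integral_cmult_indicator) auto
      finally show ?thesis by (simp add: mult.commute)
    next
      case False
      then show ?thesis by (simp add: Dn_out)
    qed
  qed
  finally show ?thesis unfolding Nn_def .
qed

lemma coarea_lower:
  assumes [measurable]: "p \<in> borel_measurable lborel"
   and h: "0 \<le> h"
   and ch: "\<And>S. S \<in> sets borel \<Longrightarrow> S \<subseteq> unitI \<Longrightarrow> ennreal h * min (vn S) (vn (unitI - S)) \<le> en S (unitI - S)"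
   and half: "\<And>t. 0 \<le> t \<Longrightarrow> vn (St p t) \<le> vn (unitI - St p t)"
  shows "2 * ennreal h * Nn p \<le> (\<integral>\<^sup>+x. \<integral>\<^sup>+y. ennreal (\<bar>(p x)\<^sup>2 - (p y)\<^sup>2\<bar> * w (x,y)) \<partial>lborel \<partial>lborel)"
proof -
  define F where "F x y t = ennreal (w (x,y)) * G ((p x)\<^sup>2) ((p y)\<^sup>2) t" for x y t
  have Fm[measurable]: "(\<lambda>z. F (fst (fst z)) (snd (fst z)) (snd z)) \<in> borel_measurable ((lborel \<Otimes>\<^sub>M lborel) \<Otimes>\<^sub>M lborel)"
    unfolding F_def by measurable
  have "(\<integral>\<^sup>+x. \<integral>\<^sup>+y. ennreal (\<bar>(p x)\<^sup>2 - (p y)\<^sup>2\<bar> * w (x,y)) \<partial>lborel \<partial>lborel)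
      = (\<integral>\<^sup>+x. \<integral>\<^sup>+y. \<integral>\<^sup>+t. F x y t \<partial>lborel \<partial>lborel \<partial>lborel)"
  proof (intro nn_integral_cong)
    fix x y
    have "ennreal (\<bar>(p x)\<^sup>2 - (p y)\<^sup>2\<bar> * w (x,y)) = ennreal (w (x,y)) * ennreal \<bar>(p x)\<^sup>2 - (p y)\<^sup>2\<bar>"
      using w_nonneg[of "(x,y)"] by (simp add: ennreal_mult mult.commute)
    also have "\<dots> = (\<integral>\<^sup>+t. F x y t \<partial>lborel)"
      unfolding F_def layer[symmetric] by (rule nn_integral_cmult[symmetric]) measurable
    finally show "ennreal (\<bar>(p x)\<^sup>2 - (p y)\<^sup>2\<bar> * w (x,y)) = (\<integral>\<^sup>+t. F x y t \<partial>lborel)" .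
  qed
  also have "\<dots> = (\<integral>\<^sup>+x. \<integral>\<^sup>+t. \<integral>\<^sup>+y. F x y t \<partial>lborel \<partial>lborel \<partial>lborel)"
  proof (rule nn_integral_cong)
    fix x
    show "(\<integral>\<^sup>+y. \<integral>\<^sup>+t. F x y t \<partial>lborel \<partial>lborel) = (\<integral>\<^sup>+t. \<integral>\<^sup>+y. F x y t \<partial>lborel \<partial>lborel)"
      by (rule lborel_pair.Fubini'[symmetric]) (unfold F_def, measurable)
  qed
  also have "\<dots> = (\<integral>\<^sup>+t. \<integral>\<^sup>+x. \<integral>\<^sup>+y. F x y t \<partial>lborel \<partial>lborel \<partial>lborel)"
    by (rule lborel_pair.Fubini'[symmetric]) (unfold F_def, measurable)
  also have "\<dots> = (\<integral>\<^sup>+t. en (St p t) (unitI - St p t) + en (unitI - St p t) (St p t) \<partial>lborel)"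
    unfolding F_def by (simp add: en_layer)
  also have "\<dots> \<ge> (\<integral>\<^sup>+t. indicator {0..} t * (2 * ennreal h * vn (St p t)) \<partial>lborel)"
  proof (intro nn_integral_mono)
    fix t
    show "indicator {0..} t * (2 * ennreal h * vn (St p t)) \<le> en (St p t) (unitI - St p t) + en (unitI - St p t) (St p t)"
    proof (cases "0 \<le> t")
      case True
      have Sb: "St p t \<in> sets borel" by (rule St_borel) simp
      have Sb2: "unitI - St p t \<in> sets borel" using Sb by auto
      have 1: "ennreal h * vn (St p t) \<le> en (St p t) (unitI - St p t)"
        using ch[OF Sb St_sub] half[OF True] by (simp add: min_def split: if_splits)
      have e: "unitI - (unitI - St p t) = St p t" using St_sub by auto
      have 2: "ennreal h * vn (St p t) \<le> en (unitI - St p t) (St p t)"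
        using ch[OF Sb2] half[OF True] by (simp add: e min_def split: if_splits)
      show ?thesis using True add_mono[OF 1 2] by (simp add: mult_2 distrib_right)
    qed simp
  qed
  also have "(\<integral>\<^sup>+t. indicator {0..} t * (2 * ennreal h * vn (St p t)) \<partial>lborel)
      = 2 * ennreal h * (\<integral>\<^sup>+t. indicator {0..} t * vn (St p t) \<partial>lborel)"
  proof -
    have "(\<lambda>t. \<integral>\<^sup>+x. (if x \<in> unitI \<and> t < (p x)\<^sup>2 then 1 else 0) * Dn x \<partial>lborel) \<in> borel_measurable lborel"
      by measurable
    moreover have "\<And>t. vn (St p t) = (\<integral>\<^sup>+x. (if x \<in> unitI \<and> t < (p x)\<^sup>2 then 1 else 0) * Dn x \<partial>lborel)"
      unfolding vn_def St_def by (intro nn_integral_cong) (auto simp: indicator_def)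
    ultimately have [measurable]: "(\<lambda>t. vn (St p t)) \<in> borel_measurable lborel" by simp
    have "(\<lambda>t. indicator {0..} t * vn (St p t)) \<in> borel_measurable lborel" by measurable
    from nn_integral_cmult[OF this, of "2 * ennreal h"] show ?thesis
      by (simp add: ac_simps)
  qed
  finally show ?thesis by (simp add: int_St_Nn)
qed

lemma coarea_upper:
  assumes [measurable]: "p \<in> borel_measurable lborel" and h: "0 \<le> h"
  shows "ennreal h * (\<integral>\<^sup>+x. \<integral>\<^sup>+y. ennreal (\<bar>(p x)\<^sup>2 - (p y)\<^sup>2\<bar> * w (x,y)) \<partial>lborel \<partial>lborel)
     \<le> Qn p + ennreal (h\<^sup>2) * Nn p"
proof -
  have "ennreal h * (\<integral>\<^sup>+x. \<integral>\<^sup>+y. ennreal (\<bar>(p x)\<^sup>2 - (p y)\<^sup>2\<bar> * w (x,y)) \<partial>lborel \<partial>lborel)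
     = (\<integral>\<^sup>+x. \<integral>\<^sup>+y. ennreal (h * (\<bar>(p x)\<^sup>2 - (p y)\<^sup>2\<bar> * w (x,y))) \<partial>lborel \<partial>lborel)"
    using h by (simp add: nn_integral_cmult[symmetric] ennreal_mult')
  also have "\<dots> \<le> (\<integral>\<^sup>+x. \<integral>\<^sup>+y. ennreal ((p y - p x)\<^sup>2 * w (x,y)) + ennreal (h\<^sup>2/2) * ennreal ((p x)\<^sup>2 * w (x,y))
         + ennreal (h\<^sup>2/2) * ennreal ((p y)\<^sup>2 * w (x,y)) \<partial>lborel \<partial>lborel)"
  proof (intro nn_integral_mono)
    fix x y
    have wn: "0 \<le> w (x,y)" by (rule w_nonneg)
    have "h * \<bar>(p x)\<^sup>2 - (p y)\<^sup>2\<bar> \<le> (p x - p y)\<^sup>2 + (h\<^sup>2/2) * ((p x)\<^sup>2 + (p y)\<^sup>2)"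
      by (rule pointwise_amgm[OF h])
    then have "h * (\<bar>(p x)\<^sup>2 - (p y)\<^sup>2\<bar> * w (x,y)) \<le> ((p x - p y)\<^sup>2 + (h\<^sup>2/2) * ((p x)\<^sup>2 + (p y)\<^sup>2)) * w (x,y)"
      using wn by (metis mult.assoc mult_right_mono)
    also have "\<dots> = (p y - p x)\<^sup>2 * w (x,y) + (h\<^sup>2/2) * ((p x)\<^sup>2 * w (x,y)) + (h\<^sup>2/2) * ((p y)\<^sup>2 * w (x,y))"
      by (simp add: power2_commute algebra_simps)
    finally have le: "h * (\<bar>(p x)\<^sup>2 - (p y)\<^sup>2\<bar> * w (x,y)) \<le> \<dots>" .
    have "ennreal ((p y - p x)\<^sup>2 * w (x,y) + (h\<^sup>2/2) * ((p x)\<^sup>2 * w (x,y)) + (h\<^sup>2/2) * ((p y)\<^sup>2 * w (x,y)))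
       = ennreal ((p y - p x)\<^sup>2 * w (x,y)) + ennreal (h\<^sup>2/2) * ennreal ((p x)\<^sup>2 * w (x,y))
         + ennreal (h\<^sup>2/2) * ennreal ((p y)\<^sup>2 * w (x,y))"
    proof -
      have n1: "0 \<le> (p y - p x)\<^sup>2 * w (x,y)" "0 \<le> (h\<^sup>2/2) * ((p x)\<^sup>2 * w (x,y))" "0 \<le> (h\<^sup>2/2) * ((p y)\<^sup>2 * w (x,y))"
        "0 \<le> (p x)\<^sup>2 * w (x,y)" "0 \<le> (p y)\<^sup>2 * w (x,y)" "0 \<le> h\<^sup>2/2" using wn by auto
      have a: "ennreal ((p y - p x)\<^sup>2 * w (x,y) + (h\<^sup>2/2) * ((p x)\<^sup>2 * w (x,y)) + (h\<^sup>2/2) * ((p y)\<^sup>2 * w (x,y)))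
        = ennreal ((p y - p x)\<^sup>2 * w (x,y) + (h\<^sup>2/2) * ((p x)\<^sup>2 * w (x,y))) + ennreal ((h\<^sup>2/2) * ((p y)\<^sup>2 * w (x,y)))"
        by (rule ennreal_plus) (use n1 in auto)
      have b: "ennreal ((p y - p x)\<^sup>2 * w (x,y) + (h\<^sup>2/2) * ((p x)\<^sup>2 * w (x,y)))
        = ennreal ((p y - p x)\<^sup>2 * w (x,y)) + ennreal ((h\<^sup>2/2) * ((p x)\<^sup>2 * w (x,y)))"
        by (rule ennreal_plus) (use n1 in auto)
      have c: "ennreal ((h\<^sup>2/2) * ((p x)\<^sup>2 * w (x,y))) = ennreal (h\<^sup>2/2) * ennreal ((p x)\<^sup>2 * w (x,y))"
        by (rule ennreal_mult) (use n1 in auto)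
      have d: "ennreal ((h\<^sup>2/2) * ((p y)\<^sup>2 * w (x,y))) = ennreal (h\<^sup>2/2) * ennreal ((p y)\<^sup>2 * w (x,y))"
        by (rule ennreal_mult) (use n1 in auto)
      show ?thesis unfolding a b c d ..
    qed
    with le show "ennreal (h * (\<bar>(p x)\<^sup>2 - (p y)\<^sup>2\<bar> * w (x,y))) \<le> \<dots>"
      by (metis ennreal_leI)
  qed
  also have "\<dots> = Qn p + ennreal (h\<^sup>2/2) * Nn p + ennreal (h\<^sup>2/2) * Nn p"
    by (simp add: nn_integral_add nn_integral_cmult Nn_x Nn_y Qn_def)
  also have "\<dots> = Qn p + ennreal (h\<^sup>2) * Nn p"
  proof -
    have "ennreal (h\<^sup>2/2) + ennreal (h\<^sup>2/2) = ennreal (h\<^sup>2)"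
      by (subst ennreal_plus[symmetric]) auto
    then show ?thesis by (metis add.assoc distrib_right)
  qed
  finally show ?thesis .
qed

lemma coarea:
  assumes [measurable]: "p \<in> borel_measurable lborel"
   and h: "0 \<le> h"
   and ch: "\<And>S. S \<in> sets borel \<Longrightarrow> S \<subseteq> unitI \<Longrightarrow> ennreal h * min (vn S) (vn (unitI - S)) \<le> en S (unitI - S)"
   and half: "\<And>t. 0 \<le> t \<Longrightarrow> vn (St p t) \<le> vn (unitI - St p t)"
   and fin: "Nn p < \<infinity>"
  shows "ennreal (h\<^sup>2) * Nn p \<le> Qn p"
proof -
  let ?P = "(\<integral>\<^sup>+x. \<integral>\<^sup>+y. ennreal (\<bar>(p x)\<^sup>2 - (p y)\<^sup>2\<bar> * w (x,y)) \<partial>lborel \<partial>lborel)"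
  have "ennreal h * (2 * ennreal h * Nn p) \<le> ennreal h * ?P"
    by (intro mult_left_mono coarea_lower[OF assms(1) h ch half]) auto
  also have "\<dots> \<le> Qn p + ennreal (h\<^sup>2) * Nn p" by (rule coarea_upper[OF assms(1) h])
  finally have 1: "ennreal h * (2 * ennreal h * Nn p) \<le> Qn p + ennreal (h\<^sup>2) * Nn p" .
  have "ennreal h * (2 * ennreal h * Nn p) = ennreal (h\<^sup>2) * Nn p + ennreal (h\<^sup>2) * Nn p"
    using h by (simp add: power2_eq_square ennreal_mult mult_2 distrib_right distrib_left ac_simps)
  with 1 have "ennreal (h\<^sup>2) * Nn p + ennreal (h\<^sup>2) * Nn p \<le> ennreal (h\<^sup>2) * Nn p + Qn p"
    by (simp add: add.commute)
  moreover have "ennreal (h\<^sup>2) * Nn p \<noteq> \<infinity>" using fin by (simp add: ennreal_mult_eq_top_iff)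
  ultimately show ?thesis by (simp add: ennreal_add_left_cancel_le)
qed

end

lemma split_ineq:
  fixes a b :: real
  shows "(max b 0 - max a 0)\<^sup>2 + (max (-b) 0 - max (-a) 0)\<^sup>2 \<le> (b - a)\<^sup>2"
proof (cases "0 \<le> a")
  case a: True
  show ?thesis
  proof (cases "0 \<le> b")
    case True then show ?thesis using a by simp
  next
    case False
    then have "a * b \<le> 0" using a by (simp add: mult_nonneg_nonpos)
    moreover have "(b - a)\<^sup>2 = a\<^sup>2 + b\<^sup>2 - 2 * (a * b)" by (simp add: power2_eq_square algebra_simps)
    ultimately show ?thesis using a False by (simp add: power2_eq_square)
  qed
next
  case a: False
  show ?thesis
  proof (cases "0 \<le> b")
    case True
    then have "a * b \<le> 0" using a by (simp add: mult_nonpos_nonneg)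
    moreover have "(b - a)\<^sup>2 = a\<^sup>2 + b\<^sup>2 - 2 * (a * b)" by (simp add: power2_eq_square algebra_simps)
    ultimately show ?thesis using a True by (simp add: power2_eq_square)
  next
    case False
    have "(b - a)\<^sup>2 = (a - b)\<^sup>2" by (simp add: power2_commute)
    then show ?thesis using a False by (simp add: power2_commute)
  qed
qed

context gsetup begin

lemma Qn_split:
  assumes [measurable]: "g \<in> borel_measurable lborel"
  shows "Qn (\<lambda>x. max (g x) 0) + Qn (\<lambda>x. max (- g x) 0) \<le> Qn g"
proof -
  have "Qn (\<lambda>x. max (g x) 0) + Qn (\<lambda>x. max (- g x) 0) =
    (\<integral>\<^sup>+x. \<integral>\<^sup>+y. ennreal ((max (g y) 0 - max (g x) 0)\<^sup>2 * w (x,y)) + ennreal ((max (- g y) 0 - max (- g x) 0)\<^sup>2 * w (x,y)) \<partial>lborel \<partial>lborel)"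
    unfolding Qn_def by (simp add: nn_integral_add)
  also have "\<dots> \<le> Qn g" unfolding Qn_def
  proof (intro nn_integral_mono)
    fix x y
    have "(max (g y) 0 - max (g x) 0)\<^sup>2 * w (x,y) + (max (- g y) 0 - max (- g x) 0)\<^sup>2 * w (x,y) \<le> (g y - g x)\<^sup>2 * w (x,y)"
    proof -
      have "((max (g y) 0 - max (g x) 0)\<^sup>2 + (max (- g y) 0 - max (- g x) 0)\<^sup>2) * w (x,y) \<le> (g y - g x)\<^sup>2 * w (x,y)"
        by (rule mult_right_mono[OF split_ineq w_nonneg])
      then show ?thesis by (simp add: distrib_right)
    qed
    then show "ennreal ((max (g y) 0 - max (g x) 0)\<^sup>2 * w (x,y)) + ennreal ((max (- g y) 0 - max (- g x) 0)\<^sup>2 * w (x,y)) \<le> ennreal ((g y - g x)\<^sup>2 * w (x,y))"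
      using w_nonneg[of "(x,y)"] by (simp add: ennreal_plus[symmetric] del: ennreal_plus)
  qed
  finally show ?thesis .
qed

lemma Nn_split:
  assumes [measurable]: "g \<in> borel_measurable lborel"
  shows "Nn (\<lambda>x. max (g x) 0) + Nn (\<lambda>x. max (- g x) 0) = Nn g"
proof -
  have "Nn (\<lambda>x. max (g x) 0) + Nn (\<lambda>x. max (- g x) 0) = 
     (\<integral>\<^sup>+x. ennreal ((max (g x) 0)\<^sup>2) * Dn x + ennreal ((max (- g x) 0)\<^sup>2) * Dn x \<partial>lborel)"
    unfolding Nn_def by (simp add: nn_integral_add)
  also have "\<dots> = Nn g" unfolding Nn_def
  proof (intro nn_integral_cong)
    fix x
    have "(max (g x) 0)\<^sup>2 + (max (- g x) 0)\<^sup>2 = (g x)\<^sup>2" by (cases "0 \<le> g x") auto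
    then show "ennreal ((max (g x) 0)\<^sup>2) * Dn x + ennreal ((max (- g x) 0)\<^sup>2) * Dn x = ennreal ((g x)\<^sup>2) * Dn x"
    proof -
      have "ennreal ((max (g x) 0)\<^sup>2) + ennreal ((max (- g x) 0)\<^sup>2) = ennreal ((g x)\<^sup>2)"
        using ennreal_plus[of "(max (g x) 0)\<^sup>2" "(max (- g x) 0)\<^sup>2"] \<open>_ = (g x)\<^sup>2\<close> by simp
      then show ?thesis by (simp add: distrib_right[symmetric])
    qed
  qed
  finally show ?thesis .
qed

lemma vn_add: 
  assumes "S \<in> sets borel"
  shows "vn S + vn (unitI - S) = vn unitI + vn (S - unitI)"
proof -
  have [measurable]: "S \<in> sets lborel" using assms by simp
  have "vn S + vn (unitI - S) = (\<integral>\<^sup>+x. indicator S x * Dn x + indicator (unitI - S) x * Dn x \<partial>lborel)"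
    unfolding vn_def by (simp add: nn_integral_add)
  also have "\<dots> = (\<integral>\<^sup>+x. indicator unitI x * Dn x + indicator (S - unitI) x * Dn x \<partial>lborel)"
    by (intro nn_integral_cong) (auto simp: indicator_def)
  also have "\<dots> = vn unitI + vn (S - unitI)"
    unfolding vn_def by (simp add: nn_integral_add)
  finally show ?thesis .
qed

lemma vn_out: "vn (S - unitI) = 0"
proof -
  have "indicator (S - unitI) x * Dn x = 0" for x
    by (cases "x \<in> unitI") (auto simp: Dn_out)
  then show ?thesis unfolding vn_def by (simp del: mult_eq_0_iff)
qed

lemma vn_le1: "vn S \<le> 1"
proof -
  have "vn S \<le> (\<integral>\<^sup>+x. indicator unitI x \<partial>lborel)"
    unfolding vn_def
  proof (intro nn_integral_mono)
    fix x show "indicator S x * Dn x \<le> indicator unitI x"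
    proof (cases "x \<in> unitI")
      case True then show ?thesis using Dn_le1[of x] by (auto simp: indicator_def)
    next
      case False then show ?thesis using Dn_out[of x] by simp
    qed
  qed
  then show ?thesis by simp
qed

lemma vn_fin: "vn S < \<infinity>" using vn_le1[of S] by (simp add: le_less_trans)

lemma half_from:
  assumes "S \<in> sets borel" "2 * vn S \<le> vn unitI"
  shows "vn S \<le> vn (unitI - S)"
proof -
  have "vn S + vn S \<le> vn S + vn (unitI - S)"
    using assms vn_add[OF assms(1)] by (simp add: vn_out mult_2)
  then show ?thesis using vn_fin[of S] by (auto simp: ennreal_add_left_cancel_le)
qed

end

context gsetup begin

lemma vn_mono: "S \<subseteq> T \<Longrightarrow> vn S \<le> vn T"
  unfolding vn_def by (intro nn_integral_mono) (auto simp: indicator_def)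

lemma vn_UNIV: "vn UNIV = vn unitI"
proof -
  have "vn {} = 0" by (simp add: vn_def)
  then show ?thesis using vn_add[of UNIV] vn_out[of UNIV] by simp
qed

lemma median_exists:
  fixes u :: "real \<Rightarrow> real"
  assumes [measurable]: "u \<in> borel_measurable lborel"
  shows "\<exists>m. 2 * vn {x. m < u x} \<le> vn unitI \<and> 2 * vn {x. u x < m} \<le> vn unitI"
proof -
  define M where "M = distr (density lborel Dn) borel u"
  have um: "u \<in> density lborel Dn \<rightarrow>\<^sub>M borel" by simp
  have emM: "emeasure M B = vn (u -` B)" if B: "B \<in> sets borel" for B
  proof -
    have "u -` B \<inter> space lborel \<in> sets lborel" using B by (rule measurable_sets[OF assms])
    then have uB[measurable]: "u -` B \<in> sets lborel" by simp
    have "emeasure M B = emeasure (density lborel Dn) (u -` B)"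
      unfolding M_def using B by (subst emeasure_distr[OF um]) auto
    also have "\<dots> = vn (u -` B)"
      using uB by (subst emeasure_density) (auto simp: vn_def mult.commute)
    finally show ?thesis .
  qed
  have spM: "space M = UNIV" unfolding M_def by simp
  have "emeasure M (space M) \<noteq> \<infinity>" using emM[of UNIV] vn_fin[of UNIV] by (simp add: spM)
  then interpret F: finite_measure M by (rule finite_measureI)
  interpret finite_borel_measure M
    by unfold_locales (simp add: M_def)
  define T where "T = measure M UNIV"
  have vI: "vn unitI = ennreal T"
    using emM[of UNIV] F.emeasure_eq_measure[of UNIV] by (simp add: T_def vn_UNIV)
  have T0: "0 \<le> T" unfolding T_def by simp
  have upper: "vn {x. t < u x} = ennreal (T - cdf M t)" for t
  proof -
    have "vn {x. t < u x} = emeasure M {t<..}" using emM[of "{t<..}"] by (simp add: vimage_def)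
    also have "\<dots> = ennreal (measure M {t<..})" by (rule F.emeasure_eq_measure)
    also have "measure M {t<..} = measure M (space M - {..t})"
      by (simp add: spM) (metis Compl_atMost Compl_eq_Diff_UNIV)
    also have "\<dots> = T - cdf M t"
      by (subst F.finite_measure_compl) (auto simp: T_def spM cdf_def M_def)
    finally show ?thesis .
  qed
  have lower: "vn {x. u x < t} = ennreal (measure M {..<t})" for t
  proof -
    have "vn {x. u x < t} = emeasure M {..<t}" using emM[of "{..<t}"] by (simp add: vimage_def)
    also have "\<dots> = ennreal (measure M {..<t})" by (rule F.emeasure_eq_measure)
    finally show ?thesis .
  qed
  show ?thesis
  proof (cases "T = 0")
    case True
    then have "vn unitI = 0" using vI by simp
    moreover have "vn S = 0" for S using vn_mono[of S UNIV] vn_UNIV \<open>vn unitI = 0\<close> by simp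
    ultimately show ?thesis by simp
  next
    case False
    then have Tpos: "0 < T" using T0 by simp
    define A where "A = {t. T/2 \<le> cdf M t}"
    have "eventually (\<lambda>t. T/2 < cdf M t) at_top"
      using cdf_lim_at_top Tpos by (intro order_tendstoD(1)) (auto simp: T_def spM)
    then obtain t0 where "T/2 < cdf M t0" by (auto simp: eventually_at_top_linorder)
    then have Ane: "A \<noteq> {}" unfolding A_def by (auto intro!: exI[of _ t0])
    have "eventually (\<lambda>t. cdf M t < T/2) at_bot"
      using cdf_lim_at_bot Tpos by (intro order_tendstoD(2)) auto
    then obtain b where b: "\<And>t. t \<le> b \<Longrightarrow> cdf M t < T/2" by (auto simp: eventually_at_bot_linorder)
    have Abd: "bdd_below A"
    proof
      fix a assume "a \<in> A"
      then show "b \<le> a" using b[of a] unfolding A_def by force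
    qed
    define m where "m = Inf A"
    have c1: "T/2 \<le> cdf M m"
    proof (rule tendsto_lowerbound)
      show "(cdf M \<longlongrightarrow> cdf M m) (at_right m)" using cdf_is_right_cont[of m] by (simp add: continuous_within)
      show "eventually (\<lambda>t. T/2 \<le> cdf M t) (at_right m)"
      proof (rule eventually_at_rightI[where b="m+1"])
        fix t assume "t \<in> {m<..<m+1}"
        then have "Inf A < t" unfolding m_def by simp
        then obtain a where "a \<in> A" "a < t" using cInf_less_iff[OF Ane Abd] by blast
        then show "T/2 \<le> cdf M t" unfolding A_def using cdf_nondecreasing[of a t] by auto
      qed simp
    qed simp
    have c2: "measure M {..<m} \<le> T/2"
    proof (rule tendsto_upperbound)
      show "(cdf M \<longlongrightarrow> measure M {..<m}) (at_left m)" by (rule cdf_at_left)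
      show "eventually (\<lambda>t. cdf M t \<le> T/2) (at_left m)"
      proof (rule eventually_at_leftI[where a="m-1"])
        fix t assume "t \<in> {m-1<..<m}"
        then have "t \<notin> A" using cInf_lower[OF _ Abd, of t] unfolding m_def by force
        then show "cdf M t \<le> T/2" unfolding A_def by simp
      qed simp
    qed simp
    show ?thesis
    proof (intro exI conjI)
      have X: "0 \<le> T - cdf M m" using cdf_bounded[of m] by (simp add: T_def spM)
      have "2 * vn {x. m < u x} = ennreal 2 * ennreal (T - cdf M m)" by (simp add: upper)
      also have "\<dots> = ennreal (2 * (T - cdf M m))" by (subst ennreal_mult) (use X in auto)
      also have "\<dots> \<le> ennreal T" using c1 by (intro ennreal_leI) simp
      finally show "2 * vn {x. m < u x} \<le> vn unitI" using vI by simp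
      have "2 * vn {x. u x < m} = ennreal 2 * ennreal (measure M {..<m})" by (simp add: lower)
      also have "\<dots> = ennreal (2 * measure M {..<m})" by (subst ennreal_mult) auto
      also have "\<dots> \<le> ennreal T" using c2 by (intro ennreal_leI) simp
      finally show "2 * vn {x. u x < m} \<le> vn unitI" using vI by simp
    qed
  qed
qed

end

context gsetup begin

lemma D_integrable: "integrable lborel D"
proof (rule Bochner_Integration.integrable_bound)
  show "integrable lborel (indicator unitI :: real \<Rightarrow> real)"
    by (rule integrable_real_indicator) auto
  show "D \<in> borel_measurable lborel" by simp
  show "AE x in lborel. norm (D x) \<le> norm (indicator unitI x :: real)"
  proof (rule AE_I2)
    fix x show "norm (D x) \<le> norm (indicator unitI x :: real)"
      using D_nonneg[of x] D_le1[of x] D_out[of x] by (cases "x \<in> unitI") auto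
  qed
qed

lemma uD_integrable:
  assumes [measurable]: "u \<in> borel_measurable lborel"
   and int2: "integrable lborel (\<lambda>x. (u x)\<^sup>2 * D x)"
  shows "integrable lborel (\<lambda>x. u x * D x)"
proof (rule Bochner_Integration.integrable_bound)
  show "integrable lborel (\<lambda>x. (u x)\<^sup>2 * D x + D x)" using int2 D_integrable by simp
  show "(\<lambda>x. u x * D x) \<in> borel_measurable lborel" by measurable
  show "AE x in lborel. norm (u x * D x) \<le> norm ((u x)\<^sup>2 * D x + D x)"
  proof (rule AE_I2)
    fix x
    have a: "\<bar>u x\<bar> \<le> (u x)\<^sup>2 + 1"
    proof (cases "\<bar>u x\<bar> \<le> 1")
      case True
      have "0 \<le> (u x)\<^sup>2" by simp
      then show ?thesis using True by linarith
    next
      case False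
      then have "\<bar>u x\<bar> * 1 \<le> \<bar>u x\<bar> * \<bar>u x\<bar>" by (intro mult_left_mono) auto
      then show ?thesis by (simp add: power2_eq_square abs_mult_self_eq)
    qed
    have "\<bar>u x\<bar> * D x \<le> ((u x)\<^sup>2 + 1) * D x" by (rule mult_right_mono[OF a D_nonneg])
    then show "norm (u x * D x) \<le> norm ((u x)\<^sup>2 * D x + D x)"
      using D_nonneg[of x] by (simp add: abs_mult distrib_right)
  qed
qed

lemma core_dummy: "True" by simp

lemma core:
  fixes u :: "real \<Rightarrow> real"
  assumes [measurable]: "u \<in> borel_measurable lborel"
   and h: "0 \<le> h"
   and ch: "\<And>S. S \<in> sets borel \<Longrightarrow> S \<subseteq> unitI \<Longrightarrow> ennreal h * min (vn S) (vn (unitI - S)) \<le> en S (unitI - S)"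
   and int2: "integrable lborel (\<lambda>x. (u x)\<^sup>2 * D x)"
   and zero: "integral\<^sup>L lborel (\<lambda>x. u x * D x) = 0"
  shows "ennreal (h\<^sup>2 * integral\<^sup>L lborel (\<lambda>x. (u x)\<^sup>2 * D x)) \<le> Qn u"
proof -
  obtain m where m: "2 * vn {x. m < u x} \<le> vn unitI" "2 * vn {x. u x < m} \<le> vn unitI"
    using median_exists[OF assms(1)] by blast
  define g where "g x = u x - m" for x
  have gm[measurable]: "g \<in> borel_measurable lborel" unfolding g_def by simp
  define gp where "gp x = max (g x) 0" for x
  define gn where "gn x = max (- g x) 0" for x
  have gpm[measurable]: "gp \<in> borel_measurable lborel" unfolding gp_def using gm by simp
  have gnm[measurable]: "gn \<in> borel_measurable lborel" unfolding gn_def using gm by simp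
  have Qg: "Qn g = Qn u" unfolding Qn_def g_def by simp
  let ?V = "integral\<^sup>L lborel (\<lambda>x. (u x)\<^sup>2 * D x)"
  have uD: "integrable lborel (\<lambda>x. u x * D x)" by (rule uD_integrable[OF assms(1) int2])
  have eq: "(g x)\<^sup>2 * D x = (u x)\<^sup>2 * D x - 2 * m * (u x * D x) + m\<^sup>2 * D x" for x
    unfolding g_def by (simp add: power2_eq_square algebra_simps)
  have i1: "integrable lborel (\<lambda>x. 2 * m * (u x * D x))" by (rule integrable_mult_right[OF uD])
  have i2: "integrable lborel (\<lambda>x. m\<^sup>2 * D x)" by (rule integrable_mult_right[OF D_integrable])
  have i3: "integrable lborel (\<lambda>x. (u x)\<^sup>2 * D x - 2 * m * (u x * D x))" by (rule Bochner_Integration.integrable_diff[OF int2 i1])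
  have ig: "integrable lborel (\<lambda>x. (g x)\<^sup>2 * D x)"
    unfolding eq by (rule Bochner_Integration.integrable_add[OF i3 i2])
  have "integral\<^sup>L lborel (\<lambda>x. (g x)\<^sup>2 * D x) = integral\<^sup>L lborel (\<lambda>x. (u x)\<^sup>2 * D x - 2 * m * (u x * D x)) + integral\<^sup>L lborel (\<lambda>x. m\<^sup>2 * D x)"
    unfolding eq by (rule Bochner_Integration.integral_add[OF i3 i2])
  also have "\<dots> = ?V - 2 * m * 0 + m\<^sup>2 * integral\<^sup>L lborel D"
    by (simp only: Bochner_Integration.integral_diff[OF int2 i1] integral_mult_right_zero zero)
  finally have "integral\<^sup>L lborel (\<lambda>x. (g x)\<^sup>2 * D x) = ?V - 2 * m * 0 + m\<^sup>2 * integral\<^sup>L lborel D" .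
  moreover have "0 \<le> integral\<^sup>L lborel D" by (simp add: D_nonneg)
  ultimately have Vle: "?V \<le> integral\<^sup>L lborel (\<lambda>x. (g x)\<^sup>2 * D x)" by simp
  have Nng: "Nn g = ennreal (integral\<^sup>L lborel (\<lambda>x. (g x)\<^sup>2 * D x))"
  proof -
    have "Nn g = (\<integral>\<^sup>+x. ennreal ((g x)\<^sup>2 * D x) \<partial>lborel)"
      unfolding Nn_def by (intro nn_integral_cong) (simp add: Dn_eq ennreal_mult D_nonneg)
    also have "\<dots> = ennreal (integral\<^sup>L lborel (\<lambda>x. (g x)\<^sup>2 * D x))"
      by (rule nn_integral_eq_integral[OF ig]) (simp add: D_nonneg)
    finally show ?thesis .
  qed
  have Nfin: "Nn g < \<infinity>" using Nng by simp
  have split: "Nn gp + Nn gn = Nn g" unfolding gp_def gn_def by (rule Nn_split) simp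
  have "Nn gp \<le> Nn g" unfolding split[symmetric] by (rule le_iff_add[THEN iffD2]) blast
  then have fp: "Nn gp < \<infinity>" using Nfin by (rule le_less_trans)
  have "Nn gn \<le> Nn g" unfolding split[symmetric] by (rule le_iff_add[THEN iffD2]) (blast intro: add.commute)
  then have fn: "Nn gn < \<infinity>" using Nfin by (rule le_less_trans)
  have halfp: "vn (St gp t) \<le> vn (unitI - St gp t)" if t: "0 \<le> t" for t
  proof (rule half_from)
    show "St gp t \<in> sets borel" by (rule St_borel) simp
    have "St gp t \<subseteq> {x. m < u x}"
    proof
      fix x assume "x \<in> St gp t"
      then have "0 < (gp x)\<^sup>2" using t unfolding St_def by auto
      then show "x \<in> {x. m < u x}" unfolding gp_def g_def by (cases "m < u x") auto
    qed
    then have "2 * vn (St gp t) \<le> 2 * vn {x. m < u x}" by (intro mult_left_mono vn_mono) auto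
    then show "2 * vn (St gp t) \<le> vn unitI" using m(1) by simp
  qed
  have halfn: "vn (St gn t) \<le> vn (unitI - St gn t)" if t: "0 \<le> t" for t
  proof (rule half_from)
    show "St gn t \<in> sets borel" by (rule St_borel) simp
    have "St gn t \<subseteq> {x. u x < m}"
    proof
      fix x assume "x \<in> St gn t"
      then have "0 < (gn x)\<^sup>2" using t unfolding St_def by auto
      then show "x \<in> {x. u x < m}" unfolding gn_def g_def by (cases "u x < m") auto
    qed
    then have "2 * vn (St gn t) \<le> 2 * vn {x. u x < m}" by (intro mult_left_mono vn_mono) auto
    then show "2 * vn (St gn t) \<le> vn unitI" using m(2) by simp
  qed
  have cp: "ennreal (h\<^sup>2) * Nn gp \<le> Qn gp" by (rule coarea[OF _ h ch halfp fp]) auto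
  have cn: "ennreal (h\<^sup>2) * Nn gn \<le> Qn gn" by (rule coarea[OF _ h ch halfn fn]) auto
  have V0: "0 \<le> ?V" by (simp add: D_nonneg)
  have "ennreal (h\<^sup>2 * ?V) = ennreal (h\<^sup>2) * ennreal ?V" using V0 by (simp add: ennreal_mult)
  also have "\<dots> \<le> ennreal (h\<^sup>2) * Nn g" unfolding Nng by (intro mult_left_mono ennreal_leI Vle) auto
  also have "\<dots> = ennreal (h\<^sup>2) * Nn gp + ennreal (h\<^sup>2) * Nn gn" by (simp add: split[symmetric] distrib_left)
  also have "\<dots> \<le> Qn gp + Qn gn" by (rule add_mono[OF cp cn])
  also have "\<dots> \<le> Qn g" unfolding gp_def gn_def by (rule Qn_split) simp
  finally show ?thesis using Qg by simp
qed

end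

lemma fun_borel:
  fixes f :: "real \<Rightarrow> real"
  assumes "f \<in> borel_measurable (lebesgue_on unitI)"
  obtains u where "u \<in> borel_measurable lborel" "AE x in lborel. x \<in> unitI \<longrightarrow> f x = u x"
proof -
  have Sl: "unitI \<in> sets lebesgue" by simp
  have "(\<lambda>x. indicator unitI x *\<^sub>R f x) \<in> borel_measurable lebesgue"
    using assms Sl by (subst (asm) borel_measurable_restrict_space_iff) auto
  then obtain u where u: "u \<in> borel_measurable lborel" "AE x in lborel. indicator unitI x *\<^sub>R f x = u x"
    using completion_ex_borel_measurable_real by blast
  show ?thesis
  proof
    show "u \<in> borel_measurable lborel" by (rule u(1))
    show "AE x in lborel. x \<in> unitI \<longrightarrow> f x = u x"
      using u(2) by eventually_elim auto
  qed
qed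

context gsetup begin

lemma vnorm2_eq:
  assumes [measurable]: "u \<in> borel_measurable lborel" and fu: "AE x in lborel. x \<in> unitI \<longrightarrow> f x = u x"
  shows "vnorm2 W f = integral\<^sup>L lborel (\<lambda>x. (u x)\<^sup>2 * D x)"
   and "integrable (lebesgue_on unitI) (\<lambda>x. (f x)\<^sup>2 * degW W x) \<longleftrightarrow> integrable lborel (\<lambda>x. (u x)\<^sup>2 * D x)"
   and "integral\<^sup>L (lebesgue_on unitI) (\<lambda>x. f x * degW W x) = integral\<^sup>L lborel (\<lambda>x. u x * D x)"
proof -
  have ae: "AE x in lborel. x \<in> unitI \<longrightarrow> (f x)\<^sup>2 * degW W x = (u x)\<^sup>2 * D x"
    using fu degW_ae by eventually_elim auto
  have ae2: "AE x in lborel. x \<in> unitI \<longrightarrow> f x * degW W x = u x * D x"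
    using fu degW_ae by eventually_elim auto
  have m1: "(\<lambda>x. (u x)\<^sup>2 * D x) \<in> borel_measurable borel" using D_meas by simp
  have m2: "(\<lambda>x. u x * D x) \<in> borel_measurable borel" using D_meas by simp
  show "vnorm2 W f = integral\<^sup>L lborel (\<lambda>x. (u x)\<^sup>2 * D x)"
    unfolding vnorm2_def by (rule lebesgue_on_borel_eq(1)[OF _ m1 ae]) (auto simp: D_out)
  show "integrable (lebesgue_on unitI) (\<lambda>x. (f x)\<^sup>2 * degW W x) \<longleftrightarrow> integrable lborel (\<lambda>x. (u x)\<^sup>2 * D x)"
    by (rule lebesgue_on_borel_eq(2)[OF _ m1 ae]) (auto simp: D_out)
  show "integral\<^sup>L (lebesgue_on unitI) (\<lambda>x. f x * degW W x) = integral\<^sup>L lborel (\<lambda>x. u x * D x)"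
    by (rule lebesgue_on_borel_eq(1)[OF _ m2 ae2]) (auto simp: D_out)
qed

lemma enorm2_eq:
  assumes [measurable]: "u \<in> borel_measurable lborel" and fu: "AE x in lborel. x \<in> unitI \<longrightarrow> f x = u x"
   and fin: "En u < \<infinity>"
  shows "enorm2 W f = enn2real (En u)"
proof -
  define Hn where "Hn x = (\<integral>\<^sup>+y. ennreal ((if x \<le> y then 1 else 0) * ((u y - u x)\<^sup>2 * w (x,y))) \<partial>lborel)" for x
  have Hm[measurable]: "Hn \<in> borel_measurable lborel" unfolding Hn_def by measurable
  have EH: "En u = (\<integral>\<^sup>+x. Hn x \<partial>lborel)" unfolding En_def Hn_def ..
  have Hfin: "AE x in lborel. Hn x \<noteq> \<infinity>"
    by (rule nn_integral_PInf_AE[OF Hm]) (use fin EH in simp)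
  have fuI: "AE y in lborel. y \<in> unitI \<longrightarrow> f y = u y" by (rule fu)
  have inner: "AE x in lborel. x \<in> unitI \<longrightarrow>
     integral\<^sup>L (lebesgue_on {x..1}) (\<lambda>y. (f y - f x)\<^sup>2 * W x y) = enn2real (Hn x)"
    using fu sections
  proof eventually_elim
    case (elim x)
    show ?case
    proof
      assume x: "x \<in> unitI"
      have hm: "(\<lambda>y. (if x \<le> y then 1 else 0) * ((u y - u x)\<^sup>2 * w (x,y))) \<in> borel_measurable borel"
      proof -
        have "(\<lambda>y. (if x \<le> y then 1 else 0) * ((u y - u x)\<^sup>2 * w (x,y))) \<in> borel_measurable lborel" by measurable
        then show ?thesis by simp
      qed
      have "integral\<^sup>L (lebesgue_on {x..1}) (\<lambda>y. (f y - f x)\<^sup>2 * W x y)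
          = integral\<^sup>L lborel (\<lambda>y. (if x \<le> y then 1 else 0) * ((u y - u x)\<^sup>2 * w (x,y)))"
      proof (rule lebesgue_on_borel_eq(1)[OF _ hm])
        show "AE y in lborel. y \<in> {x..1} \<longrightarrow> (f y - f x)\<^sup>2 * W x y = (if x \<le> y then 1 else 0) * ((u y - u x)\<^sup>2 * w (x,y))"
        proof -
          have ay: "AE y in lborel. y \<in> unitI \<longrightarrow> W x y = w (x,y)" using elim x by auto
          have fx: "f x = u x" using elim x by auto
          show ?thesis using fuI ay by eventually_elim (use fx x in auto)
        qed
        show "y \<notin> {x..1} \<Longrightarrow> (if x \<le> y then 1 else 0) * ((u y - u x)\<^sup>2 * w (x,y)) = 0" for y
          using w_out[of "(x,y)"] by auto
      qed simp
      also have "\<dots> = enn2real (Hn x)" unfolding Hn_def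
        by (subst integral_eq_nn_integral) (auto simp: w_nonneg)
      finally show "integral\<^sup>L (lebesgue_on {x..1}) (\<lambda>y. (f y - f x)\<^sup>2 * W x y) = enn2real (Hn x)" .
    qed
  qed
  have Hout: "x \<notin> unitI \<Longrightarrow> Hn x = 0" for x
  proof -
    assume x: "x \<notin> unitI"
    have "\<And>y. w (x,y) = 0" using x w_out by auto
    then show "Hn x = 0" unfolding Hn_def by simp
  qed
  have "enorm2 W f = integral\<^sup>L lborel (\<lambda>x. enn2real (Hn x))"
    unfolding enorm2_def
    by (rule lebesgue_on_borel_eq(1)[OF _ _ inner]) (auto simp: Hout)
  also have "\<dots> = enn2real (\<integral>\<^sup>+x. ennreal (enn2real (Hn x)) \<partial>lborel)"
    by (subst integral_eq_nn_integral) auto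
  also have "(\<integral>\<^sup>+x. ennreal (enn2real (Hn x)) \<partial>lborel) = (\<integral>\<^sup>+x. Hn x \<partial>lborel)"
    by (rule nn_integral_cong_AE) (use Hfin in \<open>auto simp: less_top\<close>)
  finally show ?thesis using EH by simp
qed

end

lemma eW_nonneg:
  assumes "graphon W" "A \<subseteq> unitI" "B \<subseteq> unitI"
  shows "0 \<le> eW W A B"
  unfolding eW_def
proof (rule Bochner_Integration.integral_nonneg)
  fix p assume "p \<in> space (lebesgue_on (A \<times> B))"
  then have "fst p \<in> unitI" "snd p \<in> unitI" using assms by auto
  then show "0 \<le> W (fst p) (snd p)" using assms(1) unfolding graphon_def by blast
qed

lemma volW_nonneg:
  assumes "graphon W" "A \<subseteq> unitI"
  shows "0 \<le> volW W A"
  unfolding volW_def by (rule eW_nonneg) (use assms in auto)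

context gsetup begin

lemma vn_null:
  assumes S: "S \<in> sets borel" "S \<subseteq> unitI" and m: "measure lborel S = 0"
  shows "vn S = 0"
proof -
  have "emeasure lborel S \<le> emeasure lborel unitI" using S by (intro emeasure_mono) auto
  then have fin: "emeasure lborel S < \<infinity>" by (simp add: le_less_trans)
  then have e0: "emeasure lborel S = 0" using m emeasure_eq_ennreal_measure[of lborel S] by (simp add: less_top)
  have "vn S \<le> (\<integral>\<^sup>+x. indicator S x \<partial>lborel)"
    unfolding vn_def by (intro nn_integral_mono) (use Dn_le1 in \<open>auto simp: indicator_def\<close>)
  also have "\<dots> = 0" using S e0 by simp
  finally show ?thesis by simp
qed

definition hh where "hh = cheeger W"

lemma cheeger_set_ne:
  "{eW W A (unitI - A) / min (volW W A) (volW W (unitI - A)) | A.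
     meas_subset A \<and> 0 < measure lebesgue A \<and> measure lebesgue A < 1} \<noteq> {}"
proof -
  have "meas_subset {0..1/2}" unfolding meas_subset_def by auto
  moreover have "measure lebesgue {0..1/2::real} = 1/2"
    by (subst measure_completion) auto
  ultimately have "eW W {0..1/2} (unitI - {0..1/2}) / min (volW W {0..1/2}) (volW W (unitI - {0..1/2})) \<in>
     {eW W A (unitI - A) / min (volW W A) (volW W (unitI - A)) | A.
     meas_subset A \<and> 0 < measure lebesgue A \<and> measure lebesgue A < 1}"
    by (intro CollectI exI[of _ "{0..1/2}"]) simp
  then show ?thesis by blast
qed

lemma cheeger_nonneg: "0 \<le> hh"
  unfolding hh_def cheeger_def
proof (rule cInf_greatest[OF cheeger_set_ne])
  fix r assume "r \<in> {eW W A (unitI - A) / min (volW W A) (volW W (unitI - A)) | A.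
     meas_subset A \<and> 0 < measure lebesgue A \<and> measure lebesgue A < 1}"
  then obtain A where A: "r = eW W A (unitI - A) / min (volW W A) (volW W (unitI - A))" "meas_subset A" by blast
  have "A \<subseteq> unitI" using A(2) unfolding meas_subset_def by auto
  then show "0 \<le> r" unfolding A(1) using graphon
    by (intro divide_nonneg_nonneg) (auto intro!: eW_nonneg volW_nonneg)
qed

lemma cheeger_lower:
  assumes "meas_subset A" "0 < measure lebesgue A" "measure lebesgue A < 1"
  shows "hh \<le> eW W A (unitI - A) / min (volW W A) (volW W (unitI - A))"
  unfolding hh_def cheeger_def
proof (rule cInf_lower)
  show "eW W A (unitI - A) / min (volW W A) (volW W (unitI - A)) \<in> {eW W A (unitI - A) / min (volW W A) (volW W (unitI - A)) | A.
     meas_subset A \<and> 0 < measure lebesgue A \<and> measure lebesgue A < 1}" using assms by blast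
  show "bdd_below {eW W A (unitI - A) / min (volW W A) (volW W (unitI - A)) | A.
     meas_subset A \<and> 0 < measure lebesgue A \<and> measure lebesgue A < 1}"
  proof (rule bdd_belowI[of _ 0])
    fix r assume "r \<in> {eW W A (unitI - A) / min (volW W A) (volW W (unitI - A)) | A.
       meas_subset A \<and> 0 < measure lebesgue A \<and> measure lebesgue A < 1}"
    then obtain A where A: "r = eW W A (unitI - A) / min (volW W A) (volW W (unitI - A))" "meas_subset A" by blast
    have "A \<subseteq> unitI" using A(2) unfolding meas_subset_def by auto
    then show "0 \<le> r" unfolding A(1) using graphon
      by (intro divide_nonneg_nonneg) (auto intro!: eW_nonneg volW_nonneg)
  qed
qed

lemma en_fin: "en S T < \<infinity>"
proof -
  have "en S T \<le> en UNIV unitI"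
    unfolding en_def
  proof (intro nn_integral_mono ennreal_leI)
    fix x y
    show "indicator S x * indicator T y * w (x,y) \<le> indicator UNIV x * indicator unitI y * w (x,y)"
    proof (cases "y \<in> unitI")
      case True then show ?thesis using w_nonneg[of "(x,y)"] by (auto simp: indicator_def)
    next
      case False then show ?thesis using w_out[of "(x,y)"] by auto
    qed
  qed
  also have "\<dots> = vn UNIV" by (rule en_I)
  finally show ?thesis using vn_fin[of UNIV] by (simp add: le_less_trans)
qed

lemma min_ennreal2: "0 \<le> a \<Longrightarrow> 0 \<le> b \<Longrightarrow> min (ennreal a) (ennreal b) = ennreal (min a b)"
  by (cases "a \<le> b") (auto simp: min_def)

lemma cheeger_ch:
  assumes S: "S \<in> sets borel" "S \<subseteq> unitI"
  shows "ennreal hh * min (vn S) (vn (unitI - S)) \<le> en S (unitI - S)"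
proof -
  have S2: "unitI - S \<in> sets borel" "unitI - S \<subseteq> unitI" using S by auto
  have mS: "measure lebesgue S = measure lborel S" using S by simp
  have mS2: "measure lebesgue (unitI - S) = measure lborel (unitI - S)" using S2 by simp
  have mdiff: "measure lborel (unitI - S) = 1 - measure lborel S"
    using S by (subst measure_Diff) (auto simp: emeasure_mono le_less_trans)
  show ?thesis
  proof (cases "measure lborel S = 0")
    case True
    then show ?thesis using vn_null[OF S] by simp
  next
    case False
    then have pos: "0 < measure lebesgue S" using mS by (simp add: less_le)
    show ?thesis
    proof (cases "measure lborel S < 1")
      case False
      then have "measure lborel (unitI - S) = 0" using mdiff measure_nonneg[of lborel "unitI - S"] by linarith
      then show ?thesis using vn_null[OF S2] by simp
    next
      case True
      then have lt1: "measure lebesgue S < 1" using mS by simp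
      have ms: "meas_subset S" unfolding meas_subset_def using S by auto
      have le: "hh \<le> eW W S (unitI - S) / min (volW W S) (volW W (unitI - S))"
        by (rule cheeger_lower[OF ms pos lt1])
      have eq1: "eW W S (unitI - S) = enn2real (en S (unitI - S))" by (rule eW_en[OF S S2])
      have eq2: "volW W S = enn2real (vn S)" "volW W (unitI - S) = enn2real (vn (unitI - S))"
        by (rule volW_vn[OF S], rule volW_vn[OF S2])
      define mn where "mn = min (volW W S) (volW W (unitI - S))"
      have mn0: "0 \<le> mn" unfolding mn_def eq2 by simp
      have mnE: "min (vn S) (vn (unitI - S)) = ennreal mn"
      proof -
        have a: "vn S = ennreal (enn2real (vn S))" using vn_fin[of S] by (simp add: less_top)
        have b: "vn (unitI - S) = ennreal (enn2real (vn (unitI - S)))" using vn_fin[of "unitI - S"] by (simp add: less_top)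
        show ?thesis unfolding mn_def eq2
          by (subst a, subst b, cases "enn2real (vn S) \<le> enn2real (vn (unitI - S))") (simp_all add: min_ennreal2)
      qed
      show ?thesis
      proof (cases "mn = 0")
        case True then show ?thesis using mnE by simp
      next
        case False
        then have mnp: "0 < mn" using mn0 by simp
        have "hh * mn \<le> eW W S (unitI - S)" using le mnp unfolding mn_def by (simp add: pos_le_divide_eq)
        then have "ennreal (hh * mn) \<le> ennreal (eW W S (unitI - S))" by (rule ennreal_leI)
        also have "\<dots> = en S (unitI - S)" unfolding eq1 using en_fin by (simp add: less_top)
        finally show ?thesis using mnE mn0 cheeger_nonneg by (simp add: ennreal_mult)
      qed
    qed
  qed
qed

end

context gsetup begin

lemma en_sym:
  assumes [measurable]: "S \<in> sets borel" "T \<in> sets borel"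
  shows "en S T = en T S"
proof -
  have [measurable]: "S \<in> sets lborel" "T \<in> sets lborel" using assms by auto
  have "en S T = (\<integral>\<^sup>+x. \<integral>\<^sup>+y. ennreal (indicator S y * indicator T x * w (y,x)) \<partial>lborel \<partial>lborel)"
    unfolding en_def by (rule swap_int) measurable
  also have "\<dots> = en T S" unfolding en_def by (simp add: w_sym mult.commute)
  finally show ?thesis .
qed

lemma en_le_vn:
  assumes "T \<subseteq> unitI"
  shows "en S T \<le> vn S"
proof -
  have "en S T \<le> en S unitI"
    unfolding en_def using assms
    by (intro nn_integral_mono ennreal_leI mult_right_mono) (auto simp: indicator_def w_nonneg)
  then show ?thesis by (simp add: en_I)
qed

lemma int_ind_D:
  assumes [measurable]: "A \<in> sets borel"
  shows "integrable lborel (\<lambda>x. indicator A x * D x)" "integral\<^sup>L lborel (\<lambda>x. indicator A x * D x) = enn2real (vn A)"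
proof -
  have [measurable]: "A \<in> sets lborel" using assms by simp
  show "integrable lborel (\<lambda>x. indicator A x * D x)"
  proof (rule Bochner_Integration.integrable_bound[OF D_integrable])
    show "(\<lambda>x. indicator A x * D x) \<in> borel_measurable lborel" by measurable
    show "AE x in lborel. norm (indicator A x * D x) \<le> norm (D x)"
      using D_nonneg by (auto simp: indicator_def)
  qed
  have "integral\<^sup>L lborel (\<lambda>x. indicator A x * D x) = enn2real (\<integral>\<^sup>+x. ennreal (indicator A x * D x) \<partial>lborel)"
    by (rule integral_eq_nn_integral) (auto simp: D_nonneg)
  also have "(\<integral>\<^sup>+x. ennreal (indicator A x * D x) \<partial>lborel) = vn A"
    unfolding vn_def by (intro nn_integral_cong) (simp add: Dn_eq ennreal_mult D_nonneg ennreal_indicator)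
  finally show "integral\<^sup>L lborel (\<lambda>x. indicator A x * D x) = enn2real (vn A)" .
qed

lemma lambda_ne:
  assumes conn: "connected_graphon W"
  shows "\<exists>f. L2nu W f \<and> integral\<^sup>L (lebesgue_on unitI) (\<lambda>x. f x * degW W x) = 0 \<and> vnorm2 W f \<noteq> 0"
proof -
  define A :: "real set" where "A = {0..1/2}"
  define B :: "real set" where "B = unitI - A"
  have Ab: "A \<in> sets borel" "A \<subseteq> unitI" unfolding A_def by auto
  have Bb: "B \<in> sets borel" "B \<subseteq> unitI" unfolding B_def A_def by auto
  have "meas_subset A" unfolding meas_subset_def A_def by auto
  moreover have "measure lebesgue A = 1/2" unfolding A_def by (subst measure_completion) auto
  ultimately have "eW W A B \<noteq> 0" using conn unfolding connected_graphon_def B_def by auto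
  then have e0: "en A B \<noteq> 0" using eW_en[OF Ab Bb] by auto
  have "en A B \<le> vn A" by (rule en_le_vn[OF Bb(2)])
  then have pa: "0 < vn A" using e0 by (metis less_le_trans not_gr_zero)
  have "en A B = en B A" by (rule en_sym[OF Ab(1) Bb(1)])
  also have "\<dots> \<le> vn B" by (rule en_le_vn[OF Ab(2)])
  finally have pb: "0 < vn B" using e0 by (metis less_le_trans not_gr_zero)
  define a where "a = enn2real (vn A)"
  define b where "b = enn2real (vn B)"
  have a0: "0 < a" unfolding a_def using pa vn_fin[of A] by (simp add: enn2real_positive_iff)
  have b0: "0 < b" unfolding b_def using pb vn_fin[of B] by (simp add: enn2real_positive_iff)
  define f0 where "f0 x = (if x \<le> 1/2 then b else - a)" for x :: real
  have f0m[measurable]: "f0 \<in> borel_measurable lborel" unfolding f0_def by measurable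
  have fu: "AE x in lborel. x \<in> unitI \<longrightarrow> f0 x = f0 x" by simp
  have e1: "f0 x * D x = b * (indicator A x * D x) - a * (indicator B x * D x)" for x
  proof (cases "x \<in> unitI")
    case True then show ?thesis unfolding f0_def A_def B_def by (auto simp: indicator_def)
  next
    case False then show ?thesis by (simp add: D_out)
  qed
  have e2: "(f0 x)\<^sup>2 * D x = b\<^sup>2 * (indicator A x * D x) + a\<^sup>2 * (indicator B x * D x)" for x
  proof (cases "x \<in> unitI")
    case True then show ?thesis unfolding f0_def A_def B_def by (auto simp: indicator_def)
  next
    case False then show ?thesis by (simp add: D_out)
  qed
  note iA = int_ind_D[OF Ab(1)] and iB = int_ind_D[OF Bb(1)]
  have int2: "integrable lborel (\<lambda>x. (f0 x)\<^sup>2 * D x)"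
    unfolding e2 using iA iB by simp
  have I1: "integral\<^sup>L lborel (\<lambda>x. f0 x * D x) = b * a - a * b"
    unfolding e1 using iA iB by (simp add: a_def b_def)
  have I2: "integral\<^sup>L lborel (\<lambda>x. (f0 x)\<^sup>2 * D x) = b\<^sup>2 * a + a\<^sup>2 * b"
    unfolding e2 using iA iB by (simp add: a_def b_def)
  have pos: "0 < b\<^sup>2 * a + a\<^sup>2 * b" using a0 b0 by (simp add: add_pos_pos)
  have meas: "f0 \<in> borel_measurable (lebesgue_on unitI)"
  proof (rule lebesgue_on_borel_eq(3)[of unitI "\<lambda>x. indicator unitI x * f0 x"])
    show "(\<lambda>x. indicator unitI x * f0 x) \<in> borel_measurable borel"
    proof -
      have "(\<lambda>x. indicator unitI x * f0 x) \<in> borel_measurable lborel" by measurable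
      then show ?thesis by simp
    qed
  qed auto
  show ?thesis
  proof (intro exI conjI)
    show "L2nu W f0" unfolding L2nu_def using meas vnorm2_eq(2)[OF f0m fu] int2 by simp
    show "integral\<^sup>L (lebesgue_on unitI) (\<lambda>x. f0 x * degW W x) = 0"
      using vnorm2_eq(3)[OF f0m fu] I1 by simp
    show "vnorm2 W f0 \<noteq> 0" using vnorm2_eq(1)[OF f0m fu] I2 pos by simp
  qed
qed

end

context gsetup begin

lemma En_le_Qn: "En p \<le> Qn p"
  unfolding En_def Qn_def
  by (intro nn_integral_mono ennreal_leI) (auto simp: w_nonneg)

lemma ratio_bound:
  assumes f: "L2nu W f" "integral\<^sup>L (lebesgue_on unitI) (\<lambda>x. f x * degW W x) = 0" "vnorm2 W f \<noteq> 0"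
  shows "hh\<^sup>2 / 8 \<le> enorm2 W f / vnorm2 W f"
proof -
  obtain u where u[measurable]: "u \<in> borel_measurable lborel" and fu: "AE x in lborel. x \<in> unitI \<longrightarrow> f x = u x"
    using fun_borel f(1) unfolding L2nu_def by blast
  let ?V = "integral\<^sup>L lborel (\<lambda>x. (u x)\<^sup>2 * D x)"
  have V: "vnorm2 W f = ?V" by (rule vnorm2_eq(1)[OF u fu])
  have int2: "integrable lborel (\<lambda>x. (u x)\<^sup>2 * D x)" using vnorm2_eq(2)[OF u fu] f(1) unfolding L2nu_def by simp
  have zero: "integral\<^sup>L lborel (\<lambda>x. u x * D x) = 0" using vnorm2_eq(3)[OF u fu] f(2) by simp
  have V0: "0 \<le> ?V" by (simp add: D_nonneg)
  have Vp: "0 < ?V" using V0 V f(3) by simp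
  have c: "ennreal (hh\<^sup>2 * ?V) \<le> Qn u"
    by (rule core[OF u cheeger_nonneg cheeger_ch int2 zero])
  have Nu: "Nn u = ennreal ?V"
  proof -
    have "Nn u = (\<integral>\<^sup>+x. ennreal ((u x)\<^sup>2 * D x) \<partial>lborel)"
      unfolding Nn_def by (intro nn_integral_cong) (simp add: Dn_eq ennreal_mult D_nonneg)
    also have "\<dots> = ennreal ?V"
      by (rule nn_integral_eq_integral[OF int2]) (simp add: D_nonneg)
    finally show ?thesis .
  qed
  have "En u \<le> 4 * Nn u" using En_le_Qn[of u] Qn_le[OF u] by (rule order_trans)
  then have Efin: "En u < \<infinity>" unfolding Nu by (simp add: le_less_trans ennreal_mult_less_top)
  have E: "enorm2 W f = enn2real (En u)" by (rule enorm2_eq[OF u fu Efin])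
  have "ennreal (hh\<^sup>2 * ?V) \<le> 2 * En u" using c Qn_le_En[OF u] by (rule order_trans)
  then have "enn2real (ennreal (hh\<^sup>2 * ?V)) \<le> enn2real (2 * En u)"
    by (rule enn2real_mono) (use Efin in \<open>simp add: ennreal_mult_less_top\<close>)
  then have "hh\<^sup>2 * ?V \<le> 2 * enorm2 W f" using V0 by (simp add: E enn2real_mult)
  then have r2: "hh\<^sup>2 / 2 \<le> enorm2 W f / ?V" using Vp by (simp add: pos_le_divide_eq)
  have h8: "hh\<^sup>2 / 8 \<le> hh\<^sup>2 / 2" by simp
  show ?thesis unfolding V using order_trans[OF h8 r2] .
qed

end

theorem mainTheorem2:
  fixes W :: "real \<Rightarrow> real \<Rightarrow> real"
  assumes "graphon W" and "connected_graphon W"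
  shows "lambdaW W \<ge> (cheeger W)\<^sup>2 / 8"
proof -
  obtain w where w: "w \<in> borel_measurable borel"
   "\<And>p. 0 \<le> w p" "\<And>p. w p \<le> 1" "\<And>x y. w (x,y) = w (y,x)"
   "\<And>p. p \<notin> unitI \<times> unitI \<Longrightarrow> w p = 0"
   "AE p in lborel. p \<in> unitI \<times> unitI \<longrightarrow> W (fst p) (snd p) = w p"
    using graphon_borel[OF assms(1)] by blast
  have wm: "w \<in> borel_measurable (lborel \<Otimes>\<^sub>M lborel)" using w(1) by (simp add: lborel_prod)
  interpret gsetup W w
    by unfold_locales (use assms(1) wm w in auto)
  show ?thesis
    unfolding lambdaW_def
  proof (rule cInf_greatest)
    show "{enorm2 W f / vnorm2 W f | f. L2nu W f \<and> integral\<^sup>L (lebesgue_on unitI) (\<lambda>x. f x * degW W x) = 0 \<and> vnorm2 W f \<noteq> 0} \<noteq> {}"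
      using lambda_ne[OF assms(2)] by blast
    fix r assume "r \<in> {enorm2 W f / vnorm2 W f | f. L2nu W f \<and> integral\<^sup>L (lebesgue_on unitI) (\<lambda>x. f x * degW W x) = 0 \<and> vnorm2 W f \<noteq> 0}"
    then obtain f where "r = enorm2 W f / vnorm2 W f" "L2nu W f" "integral\<^sup>L (lebesgue_on unitI) (\<lambda>x. f x * degW W x) = 0" "vnorm2 W f \<noteq> 0"
      by blast
    then show "(cheeger W)\<^sup>2 / 8 \<le> r" using ratio_bound[of f] by (simp add: hh_def)
  qed
qed

end
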